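(* In the setting of the context with $q=p+\nu$, suppose that for every $i\ge1$ the point $x_i$ is a minimizer of $x\mapsto\tilde f(x;\hat x_{i-1})+\frac{L^{\alpha}}{c_q\lambda_i^{1-\alpha}\theta_2^{\alpha}q}\|x-\hat x_{i-1}\|^{q}$ and that $$0<\theta_1\le L\lambda_i\le\theta_2\le1$$ for constants $\theta_1\le\theta_2$. Then for all $k\ge1$, $$A_k\ge\frac{\theta_1c_q\gamma}{L}\Bigl(\frac{k}{p+\nu}\Bigr)^{p+\nu},\qquad f(x_k)-f(x^* )\le\frac{h(x^*;x_0)}{A_k}\le\frac{L}{\theta_1c_q\gamma}h(x^*;x_0)\Bigl(\frac{p+\nu}{k}\Bigr)^{p+\nu}.$$
   Context: Norm conventions: $\|\cdot\|$ a norm on $\mathbb{R}^d$, $\|u\|_*:=\max\{\langle u,x\rangle:\|x\|\le1\}$; for a symmetric $p$-linear form $T$, $\|T\|_*:=\max\{T[y_1,\dots,y_p]:\|y_j\|\le1\}$, $T[h]^i:=T[h,\dots,h]$; $(p,\nu,L)$-Hölder continuous derivatives means $\frac1{(p-1)!}\|\nabla^pg(x)-\nabla^pg(y)\|_*\le L\|x-y\|^\nu$ for all $x,y$; $\varphi$ is $(s,\sigma)$-uniformly convex if $\varphi(y)\ge\varphi(x)+\langle\zeta,y-x\rangle+\frac\sigma s\|y-x\|^s$ for all $y$, all $x$ with $\partial\varphi(x)\ne\emptyset$, all $\zeta\in\partial\varphi(x)$. Setting: $f=g+l$, $g:\mathbb{R}^d\to\mathbb{R}$ convex with $(p,\nu,L)$-Hölder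 continuous derivatives ($p\in\{1,2,\dots\}$, $\nu\in[0,1]$, $p+\nu\ge2$, $L>0$), $l$ proper closed convex, $x^*$ a minimizer of $f$. $\Phi_y(x):=g(y)+\sum_{i=1}^p\frac1{i!}\nabla^ig(y)[x-y]^i$, $\hat f(x;y):=g(y)+\langle\nabla g(y),x-y\rangle+l(x)$, $\tilde f(x;y):=\Phi_y(x)+l(x)$. $\gamma,\beta>0$ with $\frac1q\|\cdot\|^q$ $(q,\beta)$-uniformly convex; $c_q:=(\beta(q-1)^{1-q})^{1/q}$; $x_0\in\mathrm{dom}\,l$; $h(\cdot;x_0):\mathbb{R}^d\to\mathbb{R}$ convex, $h\ge0$, $h(x;x_0)=0$ iff $x=x_0$, $(q,\gamma)$-uniformly convex. $\alpha\in[0,1]$. $a_i>0$, $A_0:=0$, $A_i:=A_{i-1}+a_i$, $\lambda_i:=\frac{a_i^q}{c_q\gamma A_i^{q-1}}$. Iterates: $z_0:=x_0$; for $i\ge1$, $\hat x_{i-1}:=\frac{a_i}{A_i}z_{i-1}+\frac{A_{i-1}}{A_i}x_{i-1}$, $x_i$ as in the claim, $z_i:=\operatorname{argmin}_x\{\sum_{j=1}^ia_j\hat f(x;x_j)+h(x;x_0)\}$. *)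

theory Defs
  imports "HOL-Analysis.Analysis" "HOL-Library.Extended_Real"
begin

definition is_norm :: "('a::real_vector \<Rightarrow> real) \<Rightarrow> bool" where
  "is_norm N \<longleftrightarrow> (\<forall>x. N x \<ge> 0) \<and> (\<forall>x. N x = 0 \<longleftrightarrow> x = 0)
     \<and> (\<forall>c x. N (c *\<^sub>R x) = \<bar>c\<bar> * N x) \<and> (\<forall>x y. N (x + y) \<le> N x + N y)"

definition form_dual_norm :: "('a \<Rightarrow> real) \<Rightarrow> nat \<Rightarrow> ('a list \<Rightarrow> real) \<Rightarrow> real" where
  "form_dual_norm N p T = Sup {T ys | ys. length ys = p \<and> (\<forall>y\<in>set ys. N y \<le> 1)}"

text \<open>D i x is the i-th derivative of g at x as an i-linear form on lists of length i:
  D 0 x [] = g x, and D (i+1) x (v # hs) is the (Frechet) derivative of y \<mapsto> D i y hs at x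
  in direction v, for i < p.\<close>
definition has_derivs :: "('a::real_normed_vector \<Rightarrow> real) \<Rightarrow> (nat \<Rightarrow> 'a \<Rightarrow> 'a list \<Rightarrow> real) \<Rightarrow> nat \<Rightarrow> bool" where
  "has_derivs g D p \<longleftrightarrow> (\<forall>x. D 0 x [] = g x) \<and>
     (\<forall>i<p. \<forall>x hs. length hs = i \<longrightarrow>
        ((\<lambda>y. D i y hs) has_derivative (\<lambda>v. D (Suc i) x (v # hs))) (at x))"

definition holder_derivs :: "('a::real_normed_vector \<Rightarrow> real) \<Rightarrow> ('a \<Rightarrow> real) \<Rightarrow> (nat \<Rightarrow> 'a \<Rightarrow> 'a list \<Rightarrow> real)
     \<Rightarrow> nat \<Rightarrow> real \<Rightarrow> real \<Rightarrow> bool" where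
  "holder_derivs g N D p \<nu> L \<longleftrightarrow> has_derivs g D p \<and>
     (\<forall>x y. form_dual_norm N p (\<lambda>ys. D p x ys - D p y ys) / fact (p - 1) \<le> L * N (x - y) powr \<nu>)"

definition subdiff :: "('a::real_inner \<Rightarrow> real) \<Rightarrow> 'a \<Rightarrow> 'a set" where
  "subdiff \<phi> x = {\<zeta>. \<forall>y. \<phi> y \<ge> \<phi> x + inner \<zeta> (y - x)}"

definition unif_convex :: "('a \<Rightarrow> real) \<Rightarrow> real \<Rightarrow> real \<Rightarrow> ('a::real_inner \<Rightarrow> real) \<Rightarrow> bool" where
  "unif_convex N s \<sigma> \<phi> \<longleftrightarrow> (\<forall>x. \<forall>\<zeta>\<in>subdiff \<phi> x. \<forall>y.
      \<phi> y \<ge> \<phi> x + inner \<zeta> (y - x) + \<sigma> / s * N (y - x) powr s)"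

definition proper_closed_convex :: "('a::real_normed_vector \<Rightarrow> ereal) \<Rightarrow> bool" where
  "proper_closed_convex l \<longleftrightarrow> (\<forall>x. l x \<noteq> -\<infinity>) \<and> (\<exists>x. l x \<noteq> \<infinity>) \<and>
     convex {(x, t::real). l x \<le> ereal t} \<and> closed {(x, t::real). l x \<le> ereal t}"

definition taylor_model :: "(nat \<Rightarrow> 'a \<Rightarrow> 'a list \<Rightarrow> real) \<Rightarrow> nat \<Rightarrow> 'a \<Rightarrow> 'a::real_vector \<Rightarrow> real" where
  "taylor_model D p y x = (\<Sum>i=0..p. D i y (replicate i (x - y)) / fact i)"

end

theory Submission
  imports Defs
begin


definition mlin :: "nat \<Rightarrow> ('a::real_vector list \<Rightarrow> real) \<Rightarrow> bool" where
  "mlin k T \<longleftrightarrow> (\<forall>pre post. length pre + length post + 1 = k \<longrightarrow> linear (\<lambda>v. T (pre @ v # post)))"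

lemma mlin_Cons:
  assumes "mlin (Suc k) T" shows "mlin k (\<lambda>hs. T (u # hs))"
  unfolding mlin_def
proof (intro allI impI)
  fix pre post :: "'a list" assume "length pre + length post + 1 = k"
  then have "length (u#pre) + length post + 1 = Suc k" by simp
  then have "linear (\<lambda>v. T ((u#pre) @ v # post))" using assms unfolding mlin_def by blast
  then show "linear (\<lambda>v. T (u # pre @ v # post))" by simp
qed

lemma mlin_first:
  assumes "mlin (Suc k) T" "length hs = k" shows "linear (\<lambda>v. T (v # hs))"
proof -
  have "length ([]::'a list) + length hs + 1 = Suc k" using assms by simp
  then have "linear (\<lambda>v. T ([] @ v # hs))" using assms(1) unfolding mlin_def by blast
  then show ?thesis by simp
qed



lemma lin_add: "linear f \<Longrightarrow> f (x + y) = f x + f y" by (simp add: linear_iff)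
lemma lin_scale: "linear (f::'a::real_vector\<Rightarrow>real) \<Longrightarrow> f (c *\<^sub>R x) = c * f x" by (simp add: linear_iff)
lemma lin_zero: "linear (f::'a::real_vector\<Rightarrow>real) \<Longrightarrow> f 0 = 0"
  using lin_scale[of f 0 0] by simp
lemma lin_sum: assumes "linear (f::'a::real_vector\<Rightarrow>real)" "finite S" shows "f (\<Sum>b\<in>S. g b) = (\<Sum>b\<in>S. f (g b))"
  using assms(2) by (induction S rule: finite_induct) (auto simp: lin_zero[OF assms(1)] lin_add[OF assms(1)])

lemma mlin_expand:
  fixes T :: "'a::euclidean_space list \<Rightarrow> real"
  assumes "mlin (Suc k) T" "length hs = k"
  shows "T (v # hs) = (\<Sum>b\<in>Basis. (v \<bullet> b) * T (b # hs))"
proof -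
  have lin: "linear (\<lambda>v. T (v # hs))" using mlin_first[OF assms] .
  have "T (v # hs) = T ((\<Sum>b\<in>Basis. (v \<bullet> b) *\<^sub>R b) # hs)" by (simp add: euclidean_representation)
  also have "\<dots> = (\<Sum>b\<in>Basis. T (((v \<bullet> b) *\<^sub>R b) # hs))"
    using lin_sum[OF lin, of Basis "\<lambda>b. (v \<bullet> b) *\<^sub>R b"] by simp
  also have "\<dots> = (\<Sum>b\<in>Basis. (v \<bullet> b) * T (b # hs))"
    using lin_scale[OF lin] by simp
  finally show ?thesis .
qed

lemma mlin_bounded:
  fixes T :: "'a::euclidean_space list \<Rightarrow> real"
  assumes "mlin k T"
  shows "\<exists>C\<ge>0. \<forall>ys. length ys = k \<longrightarrow> \<bar>T ys\<bar> \<le> C * prod_list (map norm ys)"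
  using assms
proof (induction k arbitrary: T)
  case 0
  show ?case by (rule exI[of _ "\<bar>T []\<bar>"]) simp
next
  case (Suc k)
  have "\<forall>b. \<exists>C\<ge>0. \<forall>ys. length ys = k \<longrightarrow> \<bar>T (b # ys)\<bar> \<le> C * prod_list (map norm ys)"
    using Suc.IH[OF mlin_Cons[OF Suc.prems]] by blast
  then have "\<exists>C. \<forall>b. C b \<ge> 0 \<and> (\<forall>ys. length ys = k \<longrightarrow> \<bar>T (b # ys)\<bar> \<le> C b * prod_list (map norm ys))"
    by (rule choice)
  then obtain C where C: "\<And>b. C b \<ge> 0" "\<And>b ys. length ys = k \<Longrightarrow> \<bar>T (b # ys)\<bar> \<le> C b * prod_list (map norm ys)"
    by blast
  show ?case
  proof (intro exI[of _ "\<Sum>b\<in>Basis. C b"] conjI allI impI)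
    show "0 \<le> (\<Sum>b\<in>Basis. C b)" by (simp add: C sum_nonneg)
    fix ys :: "'a list" assume len: "length ys = Suc k"
    then obtain v hs where ys: "ys = v # hs" and hs: "length hs = k" by (cases ys) auto
    have P: "prod_list (map norm hs) \<ge> 0" by (induction hs) auto
    have "T ys = (\<Sum>b\<in>Basis. (v \<bullet> b) * T (b # hs))" unfolding ys by (rule mlin_expand[OF Suc.prems hs])
    then have "\<bar>T ys\<bar> = \<bar>\<Sum>b\<in>Basis. (v \<bullet> b) * T (b # hs)\<bar>" by (rule arg_cong)
    also have "\<dots> \<le> (\<Sum>b\<in>Basis. \<bar>(v \<bullet> b) * T (b # hs)\<bar>)" by (rule sum_abs)
    also have "\<dots> \<le> (\<Sum>b\<in>Basis. norm v * (C b * prod_list (map norm hs)))"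
    proof (rule sum_mono)
      fix b :: 'a assume b: "b \<in> Basis"
      have "\<bar>v \<bullet> b\<bar> \<le> norm v" using Basis_le_norm[OF b] .
      then show "\<bar>(v \<bullet> b) * T (b # hs)\<bar> \<le> norm v * (C b * prod_list (map norm hs))"
        unfolding abs_mult by (intro mult_mono C(2)[OF hs]) auto
    qed
    also have "\<dots> = (\<Sum>b\<in>Basis. C b * (norm v * prod_list (map norm hs)))"
      by (rule sum.cong) auto
    also have "\<dots> = (\<Sum>b\<in>Basis. C b) * prod_list (map norm ys)"
      using ys by (subst sum_distrib_right) simp
    finally show "\<bar>T ys\<bar> \<le> (\<Sum>b\<in>Basis. C b) * prod_list (map norm ys)" .
  qed
qed

lemma is_normD:
  assumes "is_norm N"
  shows "N x \<ge> 0" "N x = 0 \<longleftrightarrow> x = 0" "N (c *\<^sub>R x) = \<bar>c\<bar> * N x" "N (x + y) \<le> N x + N y"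
  using assms unfolding is_norm_def by auto

lemma is_norm_minus: "is_norm N \<Longrightarrow> N (- x) = N x"
  using is_normD(3)[of N "-1" x] by simp

lemma is_norm_diff_le: "is_norm N \<Longrightarrow> N x - N y \<le> N (x - y)"
  using is_normD(4)[of N "x - y" y] by simp

lemma is_norm_sum: assumes "is_norm N" "finite S" shows "N (\<Sum>b\<in>S. g b) \<le> (\<Sum>b\<in>S. N (g b))"
  using assms(2)
proof (induction S rule: finite_induct)
  case empty then show ?case using is_normD(2)[OF assms(1), of 0] by simp
next
  case (insert a S)
  then show ?case using is_normD(4)[OF assms(1), of "g a" "sum g S"] by simp
qed

lemma is_norm_upper:
  fixes N :: "'a::euclidean_space \<Rightarrow> real"
  assumes "is_norm N"
  shows "N x \<le> (\<Sum>b\<in>Basis. N b) * norm x"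
proof -
  have "N x = N (\<Sum>b\<in>Basis. (x \<bullet> b) *\<^sub>R b)" by (simp add: euclidean_representation)
  also have "\<dots> \<le> (\<Sum>b\<in>Basis. N ((x \<bullet> b) *\<^sub>R b))" by (rule is_norm_sum[OF assms]) simp
  also have "\<dots> = (\<Sum>b\<in>Basis. \<bar>x \<bullet> b\<bar> * N b)" using is_normD(3)[OF assms] by simp
  also have "\<dots> \<le> (\<Sum>b\<in>Basis. norm x * N b)"
    by (intro sum_mono mult_right_mono Basis_le_norm is_normD(1)[OF assms])
  also have "\<dots> = (\<Sum>b\<in>Basis. N b) * norm x" by (subst sum_distrib_right) (simp add: mult.commute)
  finally show ?thesis .
qed

lemma is_norm_lower:
  fixes N :: "'a::euclidean_space \<Rightarrow> real"
  assumes "is_norm N"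
  shows "\<exists>c>0. \<forall>x. c * norm x \<le> N x"
proof -
  define M where "M = (\<Sum>b\<in>Basis. N b)"
  have M0: "M \<ge> 0" unfolding M_def by (simp add: sum_nonneg is_normD(1)[OF assms])
  have cont: "continuous_on (sphere (0::'a) 1) N"
  proof (rule continuous_on_subset[of UNIV], rule continuous_onI, simp)
    fix x :: 'a and e :: real assume e: "e > 0"
    show "\<exists>d>0. \<forall>x'. dist x' x < d \<longrightarrow> dist (N x') (N x) \<le> e"
    proof (intro exI[of _ "e / (M + 1)"] conjI allI impI)
      show "e / (M + 1) > 0" using e M0 by simp
      fix x' assume "dist x' x < e / (M + 1)"
      then have d: "norm (x' - x) * (M+1) < e" using M0 by (simp add: dist_norm field_simps)
      have "\<bar>N x' - N x\<bar> \<le> N (x' - x)"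
        using is_norm_diff_le[OF assms, of x' x] is_norm_diff_le[OF assms, of x x']
          is_norm_minus[OF assms, of "x' - x"] by (simp add: abs_le_iff)
      also have "\<dots> \<le> M * norm (x' - x)" using is_norm_upper[OF assms] M_def by simp
      also have "\<dots> \<le> norm (x' - x) * (M+1)" by (simp add: algebra_simps)
      finally show "dist (N x') (N x) \<le> e" using d by (simp add: dist_real_def)
    qed
  qed simp
  obtain b :: 'a where b: "b \<in> Basis" using nonempty_Basis by blast
  then have "b \<in> sphere (0::'a) 1" by simp
  then have ne: "sphere (0::'a) 1 \<noteq> {}" by blast
  obtain y0 where y0: "y0 \<in> sphere 0 1" "\<And>y. y \<in> sphere 0 1 \<Longrightarrow> N y0 \<le> N y"
    using continuous_attains_inf[OF compact_sphere ne cont] by blast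
  have c0: "N y0 > 0" using y0(1) is_normD(1,2)[OF assms, of y0] by (auto simp: less_le)
  show ?thesis
  proof (intro exI[of _ "N y0"] conjI allI c0)
    fix x :: 'a
    show "N y0 * norm x \<le> N x"
    proof (cases "x = 0")
      case True then show ?thesis by (simp add: is_normD[OF assms])
    next
      case False
      have "N y0 \<le> N ((1 / norm x) *\<^sub>R x)" using y0(2) False by simp
      also have "\<dots> = N x / norm x" using is_normD(3)[OF assms] by simp
      finally show ?thesis using False by (simp add: field_simps)
    qed
  qed
qed



lemma mlin_scale:
  fixes T :: "'a::real_vector list \<Rightarrow> real"
  assumes "mlin k T" "length ys = k" "length cs = k"
  shows "T (map2 (\<lambda>c y. c *\<^sub>R y) cs ys) = prod_list cs * T ys"
  using assms
proof (induction ys arbitrary: k T cs)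
  case Nil then show ?case by simp
next
  case (Cons y ys)
  then obtain k' c cs' where k: "k = Suc k'" and cs: "cs = c # cs'" and l: "length ys = k'" "length cs' = k'"
    by (cases cs) auto
  have m: "mlin (Suc k') T" using Cons.prems k by simp
  have lin: "linear (\<lambda>v. T (v # map2 (\<lambda>c y. c *\<^sub>R y) cs' ys))"
    by (rule mlin_first[OF m]) (simp add: l)
  have "T (map2 (\<lambda>c y. c *\<^sub>R y) cs (y # ys)) = T ((c *\<^sub>R y) # map2 (\<lambda>c y. c *\<^sub>R y) cs' ys)"
    by (simp add: cs)
  also have "\<dots> = c * T (y # map2 (\<lambda>c y. c *\<^sub>R y) cs' ys)"
    by (rule lin_scale[OF lin])
  also have "T (y # map2 (\<lambda>c y. c *\<^sub>R y) cs' ys) = prod_list cs' * T (y # ys)"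
    using Cons.IH[OF mlin_Cons[OF m] l(1) l(2)] by simp
  finally show ?case by (simp add: cs)
qed

lemma mlin_zero_arg:
  fixes T :: "'a::real_vector list \<Rightarrow> real"
  assumes "mlin k T" "length ys = k" "0 \<in> set ys"
  shows "T ys = 0"
proof -
  obtain pre post where ys: "ys = pre @ 0 # post" using split_list[OF assms(3)] by blast
  have "linear (\<lambda>v. T (pre @ v # post))" using assms(1,2) ys unfolding mlin_def by simp
  from lin_zero[OF this] show ?thesis using ys by simp
qed

lemma prod_list_le_pow:
  assumes "\<And>y. y \<in> set ys \<Longrightarrow> 0 \<le> f y \<and> f y \<le> (B::real)"
  shows "prod_list (map f ys) \<le> B ^ length ys"
  using assms
proof (induction ys)
  case Nil then show ?case by simp
next
  case (Cons y ys)
  have "0 \<le> f y" "f y \<le> B" using Cons.prems by auto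
  moreover have "prod_list (map f ys) \<le> B ^ length ys" using Cons by auto
  moreover have "0 \<le> prod_list (map f ys)"
  proof -
    have "\<And>z. z \<in> set ys \<Longrightarrow> 0 \<le> f z" using Cons.prems by auto
    then show ?thesis by (induction ys) auto
  qed
  ultimately show ?case by (simp add: mult_mono)
qed

lemma map2_inv:
  assumes "\<And>y. y \<in> set ys \<Longrightarrow> (N::'a::real_vector \<Rightarrow> real) y \<noteq> 0"
  shows "map2 (\<lambda>c y. c *\<^sub>R y) (map N ys) (map (\<lambda>y. (1 / N y) *\<^sub>R y) ys) = ys"
  using assms by (induction ys) auto

lemma fdn_upper:
  fixes N :: "'a::euclidean_space \<Rightarrow> real" and T :: "'a list \<Rightarrow> real"
  assumes N: "is_norm N" and T: "mlin k T" and ys: "length ys = k"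
  shows "T ys \<le> form_dual_norm N k T * prod_list (map N ys)"
proof -
  define S where "S = {T ys | ys. length ys = k \<and> (\<forall>y\<in>set ys. N y \<le> 1)}"
  obtain C where C: "C \<ge> 0" "\<And>ys. length ys = k \<Longrightarrow> \<bar>T ys\<bar> \<le> C * prod_list (map norm ys)"
    using mlin_bounded[OF T] by blast
  obtain c where c: "c > 0" "\<And>x. c * norm x \<le> N x" using is_norm_lower[OF N] by blast
  have bdd: "bdd_above S"
  proof (rule bdd_aboveI)
    fix s assume "s \<in> S"
    then obtain zs where zs: "s = T zs" "length zs = k" "\<forall>y\<in>set zs. N y \<le> 1" unfolding S_def by blast
    have "prod_list (map norm zs) \<le> (1/c) ^ length zs"
    proof (rule prod_list_le_pow)
      fix y assume "y \<in> set zs"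
      then have "c * norm y \<le> 1" using zs(3) c(2)[of y] by force
      then show "0 \<le> norm y \<and> norm y \<le> 1 / c" using c(1) by (simp add: field_simps)
    qed
    then have "s \<le> C * (1/c) ^ k" using C(2)[OF zs(2)] zs(1,2) C(1)
      by (smt (verit, best) mult_left_mono)
    then show "s \<le> C * (1/c) ^ k" .
  qed
  have fdn: "form_dual_norm N k T = Sup S" unfolding form_dual_norm_def S_def by simp
  show ?thesis
  proof (cases "\<forall>y\<in>set ys. N y \<noteq> 0")
    case True
    define ys' where "ys' = map (\<lambda>y. (1 / N y) *\<^sub>R y) ys"
    have ys'S: "T ys' \<in> S" unfolding S_def ys'_def
    proof (intro CollectI exI conjI ballI)
      show "length (map (\<lambda>y. (1 / N y) *\<^sub>R y) ys) = k" using ys by simp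
      fix y assume "y \<in> set (map (\<lambda>y. (1 / N y) *\<^sub>R y) ys)"
      then obtain z where z: "z \<in> set ys" "y = (1 / N z) *\<^sub>R z" by auto
      have "N z \<ge> 0" using is_normD(1)[OF N] .
      then show "N y \<le> 1" using z True is_normD(3)[OF N, of "1 / N z" z] by simp
    qed simp
    have eq: "T ys = prod_list (map N ys) * T ys'"
    proof -
      have "T ys = T (map2 (\<lambda>c y. c *\<^sub>R y) (map N ys) ys')"
        unfolding ys'_def using map2_inv[of ys N] True by simp
      also have "\<dots> = prod_list (map N ys) * T ys'"
        by (rule mlin_scale[OF T]) (use ys in \<open>simp_all add: ys'_def\<close>)
      finally show ?thesis .
    qed
    have "T ys' \<le> Sup S" by (rule cSup_upper[OF ys'S bdd])
    moreover have "prod_list (map N ys) \<ge> 0" using is_normD(1)[OF N] by (induction ys) auto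
    ultimately show ?thesis unfolding eq fdn by (simp add: mult_right_mono mult.commute)
  next
    case False
    then obtain y where y: "y \<in> set ys" "N y = 0" by blast
    then have "y = 0" using is_normD(2)[OF N] by simp
    then have "T ys = 0" using mlin_zero_arg[OF T ys] y(1) by simp
    moreover have "prod_list (map N ys) = 0" using y
      by (induction ys) auto
    ultimately show ?thesis by simp
  qed
qed

lemma fdn_abs:
  fixes N :: "'a::euclidean_space \<Rightarrow> real" and T :: "'a list \<Rightarrow> real"
  assumes N: "is_norm N" and T: "mlin (Suc k) T" and ys: "length ys = Suc k"
  shows "\<bar>T ys\<bar> \<le> form_dual_norm N (Suc k) T * prod_list (map N ys)"
proof -
  obtain y hs where yhs: "ys = y # hs" and hs: "length hs = k" using ys by (cases ys) auto
  have lin: "linear (\<lambda>v. T (v # hs))" by (rule mlin_first[OF T hs])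
  have "- T ys = T ((-1) *\<^sub>R y # hs)" using lin_scale[OF lin, of "-1" y] yhs by simp
  also have "\<dots> \<le> form_dual_norm N (Suc k) T * prod_list (map N ((-1) *\<^sub>R y # hs))"
    by (rule fdn_upper[OF N T]) (simp add: hs)
  also have "\<dots> = form_dual_norm N (Suc k) T * prod_list (map N ys)"
    using is_norm_minus[OF N, of y] yhs by simp
  finally have "- T ys \<le> form_dual_norm N (Suc k) T * prod_list (map N ys)" .
  moreover have "T ys \<le> form_dual_norm N (Suc k) T * prod_list (map N ys)" by (rule fdn_upper[OF N T ys])
  ultimately show ?thesis by (simp add: abs_le_iff)
qed



lemma hdD:
  assumes "has_derivs g D p" "i < p" "length hs = i"
  shows "((\<lambda>y. D i y hs) has_derivative (\<lambda>v. D (Suc i) x (v # hs))) (at x)"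
  using assms unfolding has_derivs_def by blast

lemma D_mlin:
  assumes hd: "has_derivs g D p"
  shows "k \<le> p \<Longrightarrow> mlin k (D k x)"
proof (induction k arbitrary: x)
  case 0 then show ?case unfolding mlin_def by simp
next
  case (Suc k)
  have kp: "k < p" using Suc.prems by simp
  have IH: "\<And>z. mlin k (D k z)" using Suc.IH kp by simp
  show ?case unfolding mlin_def
  proof (intro allI impI)
    fix pre post :: "'a list" assume len: "length pre + length post + 1 = Suc k"
    show "linear (\<lambda>v. D (Suc k) x (pre @ v # post))"
    proof (cases pre)
      case Nil
      then have "length post = k" using len by simp
      from hdD[OF hd kp this, of x] have "bounded_linear (\<lambda>v. D (Suc k) x (v # post))"
        by (rule has_derivative_bounded_linear)
      then show ?thesis using Nil by (simp add: bounded_linear.linear)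
    next
      case (Cons p0 pre')
      have len': "length pre' + length post + 1 = k" using len Cons by simp
      have lin: "\<And>z. linear (\<lambda>v. D k z (pre' @ v # post))" using IH len' unfolding mlin_def by blast
      have lens: "\<And>v. length (pre' @ v # post) = k" using len' by simp
      have comb: "D (Suc k) x (u # pre' @ (a *\<^sub>R v + b *\<^sub>R w) # post)
          = a * D (Suc k) x (u # pre' @ v # post) + b * D (Suc k) x (u # pre' @ w # post)" for u v w a b
      proof -
        have eqf: "(\<lambda>z. D k z (pre' @ (a *\<^sub>R v + b *\<^sub>R w) # post)) = (\<lambda>z. a * D k z (pre' @ v # post) + b * D k z (pre' @ w # post))"
          using lin_add[OF lin] lin_scale[OF lin] by presburger
        have d1: "((\<lambda>z. D k z (pre' @ (a *\<^sub>R v + b *\<^sub>R w) # post)) has_derivative (\<lambda>u. D (Suc k) x (u # pre' @ (a *\<^sub>R v + b *\<^sub>R w) # post))) (at x)"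
          by (rule hdD[OF hd kp lens])
        have d2: "((\<lambda>z. a * D k z (pre' @ v # post) + b * D k z (pre' @ w # post)) has_derivative
             (\<lambda>u. a * D (Suc k) x (u # pre' @ v # post) + b * D (Suc k) x (u # pre' @ w # post))) (at x)"
          by (intro has_derivative_add has_derivative_mult_right hdD[OF hd kp lens])
        have "(\<lambda>u. D (Suc k) x (u # pre' @ (a *\<^sub>R v + b *\<^sub>R w) # post)) = (\<lambda>u. a * D (Suc k) x (u # pre' @ v # post) + b * D (Suc k) x (u # pre' @ w # post))"
          by (rule has_derivative_unique[OF d1]) (use d2 eqf in simp)
        then show ?thesis by metis
      qed
      show ?thesis unfolding Cons
      proof (rule linearI)
        fix v w :: 'a
        show "D (Suc k) x ((p0 # pre') @ (v + w) # post) = D (Suc k) x ((p0 # pre') @ v # post) + D (Suc k) x ((p0 # pre') @ w # post)"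
          using comb[of p0 1 v 1 w] by simp
      next
        fix c :: real and v :: 'a
        show "D (Suc k) x ((p0 # pre') @ (c *\<^sub>R v) # post) = c *\<^sub>R D (Suc k) x ((p0 # pre') @ v # post)"
          using comb[of p0 c v 0 v] by simp
      qed
    qed
  qed
qed



lemma schwarz_approx:
  fixes f :: "'a::real_normed_vector \<Rightarrow> real" and f' f'' :: "'a \<Rightarrow> 'a \<Rightarrow> real"
  assumes d1: "\<And>z. (f has_derivative f' z) (at z)"
    and d2: "((\<lambda>z. f' z v) has_derivative (\<lambda>w. f'' w v)) (at x)"
    and e: "e > 0"
  shows "\<exists>d>0. \<forall>s. 0 < s \<and> s < d \<longrightarrow>
     \<bar>(f (x + s *\<^sub>R u + s *\<^sub>R v) - f (x + s *\<^sub>R u) - f (x + s *\<^sub>R v) + f x) - s\<^sup>2 * f'' u v\<bar>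
       \<le> e * s\<^sup>2 * (norm u + 2 * norm v)"
proof -
  have bl: "bounded_linear (\<lambda>w. f'' w v)" using has_derivative_bounded_linear[OF d2] .
  have linf': "\<And>z. linear (f' z)" using d1 has_derivative_bounded_linear bounded_linear.linear by blast
  from d2[unfolded has_derivative_at_alt] e obtain d0 where d0: "d0 > 0"
    "\<And>y. norm (y - x) < d0 \<Longrightarrow> norm (f' y v - f' x v - f'' (y - x) v) \<le> e * norm (y - x)"
    by blast
  define d where "d = d0 / (norm u + norm v + 1)"
  have dpos: "d > 0" unfolding d_def using d0 by (simp add: add_nonneg_pos)
  show ?thesis
  proof (intro exI[of _ d] conjI allI impI dpos)
    fix s :: real assume s: "0 < s \<and> s < d"
    define G where "G = (\<lambda>t. f (x + s *\<^sub>R u + t *\<^sub>R v) - f (x + t *\<^sub>R v))"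
    define G' where "G' = (\<lambda>t. f' (x + s *\<^sub>R u + t *\<^sub>R v) v - f' (x + t *\<^sub>R v) v)"
    have der: "DERIV G t :> G' t" for t
    proof -
      have i1: "((\<lambda>t. x + s *\<^sub>R u + t *\<^sub>R v) has_derivative (\<lambda>h. h *\<^sub>R v)) (at t)"
        by (auto intro!: derivative_eq_intros)
      have i2: "((\<lambda>t. x + t *\<^sub>R v) has_derivative (\<lambda>h. h *\<^sub>R v)) (at t)"
        by (auto intro!: derivative_eq_intros)
      have c1: "((\<lambda>t. f (x + s *\<^sub>R u + t *\<^sub>R v)) has_derivative (\<lambda>h. f' (x + s *\<^sub>R u + t *\<^sub>R v) (h *\<^sub>R v))) (at t)"
        using has_derivative_compose[OF i1 d1] .
      have c2: "((\<lambda>t. f (x + t *\<^sub>R v)) has_derivative (\<lambda>h. f' (x + t *\<^sub>R v) (h *\<^sub>R v))) (at t)"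
        using has_derivative_compose[OF i2 d1] .
      have "(G has_derivative (\<lambda>h. f' (x + s *\<^sub>R u + t *\<^sub>R v) (h *\<^sub>R v) - f' (x + t *\<^sub>R v) (h *\<^sub>R v))) (at t)"
        unfolding G_def by (rule has_derivative_diff[OF c1 c2])
      moreover have "(\<lambda>h. f' (x + s *\<^sub>R u + t *\<^sub>R v) (h *\<^sub>R v) - f' (x + t *\<^sub>R v) (h *\<^sub>R v)) = (*) (G' t)"
        unfolding G'_def using lin_scale[OF linf'] by (auto simp: algebra_simps)
      ultimately show ?thesis unfolding has_field_derivative_def by simp
    qed
    obtain th where th: "0 < th" "th < s" "G s - G 0 = (s - 0) * G' th"
      using MVT2[of 0 s G G'] der s by blast
    have Gdiff: "G s - G 0 = f (x + s *\<^sub>R u + s *\<^sub>R v) - f (x + s *\<^sub>R u) - f (x + s *\<^sub>R v) + f x"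
      unfolding G_def by simp
    define y1 where "y1 = x + s *\<^sub>R u + th *\<^sub>R v"
    define y2 where "y2 = x + th *\<^sub>R v"
    have n1: "norm (y1 - x) \<le> s * norm u + th * norm v"
      unfolding y1_def using norm_triangle_ineq[of "s *\<^sub>R u" "th *\<^sub>R v"] s th by simp
    have n2: "norm (y2 - x) = th * norm v" unfolding y2_def using th by simp
    have P: "norm u + norm v + 1 > 0" by (simp add: add_nonneg_pos)
    have sd: "s * (norm u + norm v + 1) < d0"
      using s pos_less_divide_eq[OF P, of s d0] unfolding d_def by simp
    have thv: "th * norm v \<le> s * norm v" using th by (intro mult_right_mono) auto
    have "s * norm u + th * norm v \<le> s * (norm u + norm v + 1)"
      using thv s by (simp add: algebra_simps)
    then have lt1: "norm (y1 - x) < d0" using n1 sd by linarith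
    have ex: "s * (norm u + norm v + 1) = s * norm u + s * norm v + s" by (simp add: algebra_simps)
    have "s * norm u \<ge> 0" using s by simp
    then have "th * norm v \<le> s * (norm u + norm v + 1)"
      using s thv unfolding ex by linarith
    then have lt2: "norm (y2 - x) < d0" using n2 sd by linarith
    have e1: "\<bar>f' y1 v - f' x v - f'' (y1 - x) v\<bar> \<le> e * (s * norm u + th * norm v)"
      using d0(2)[OF lt1] n1 e by (smt (verit) mult_left_mono real_norm_def)
    have e2: "\<bar>f' y2 v - f' x v - f'' (y2 - x) v\<bar> \<le> e * (th * norm v)"
      using d0(2)[OF lt2] n2 by simp
    have lin2: "f'' (y1 - x) v - f'' (y2 - x) v = s * f'' u v"
    proof -
      have eq: "y1 - x = s *\<^sub>R u + (y2 - x)" unfolding y1_def y2_def by simp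
      have L: "linear (\<lambda>w. f'' w v)" using bounded_linear.linear[OF bl] .
      show ?thesis unfolding eq using lin_add[OF L, of "s *\<^sub>R u" "y2 - x"] lin_scale[OF L, of s u] by simp
    qed
    have G'th: "G' th = f' y1 v - f' y2 v" unfolding G'_def y1_def y2_def by simp
    have "\<bar>G' th - s * f'' u v\<bar> \<le> \<bar>f' y1 v - f' x v - f'' (y1 - x) v\<bar> + \<bar>f' y2 v - f' x v - f'' (y2 - x) v\<bar>"
      unfolding G'th using lin2 by linarith
    also have "\<dots> \<le> e * (s * norm u + th * norm v) + e * (th * norm v)" using e1 e2 by linarith
    also have "\<dots> = e * (s * norm u + 2 * (th * norm v))" by (simp add: algebra_simps)
    also have "\<dots> \<le> e * (s * norm u + 2 * (s * norm v))"
      using thv e by (intro mult_left_mono) auto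
    also have "\<dots> = e * (s * (norm u + 2 * norm v))" by (simp add: algebra_simps)
    finally have Gth2: "\<bar>G' th - s * f'' u v\<bar> \<le> e * (s * (norm u + 2 * norm v))" .
    have eqs: "(G s - G 0) - s\<^sup>2 * f'' u v = s * (G' th - s * f'' u v)"
      using th(3) by (simp add: power2_eq_square algebra_simps)
    have "\<bar>(G s - G 0) - s\<^sup>2 * f'' u v\<bar> = s * \<bar>G' th - s * f'' u v\<bar>"
      unfolding eqs using s by (simp add: abs_mult)
    also have "\<dots> \<le> s * (e * (s * (norm u + 2 * norm v)))" using Gth2 s by (intro mult_left_mono) auto
    also have "\<dots> = e * s\<^sup>2 * (norm u + 2 * norm v)" by (simp add: power2_eq_square algebra_simps)
    finally show "\<bar>(f (x + s *\<^sub>R u + s *\<^sub>R v) - f (x + s *\<^sub>R u) - f (x + s *\<^sub>R v) + f x) - s\<^sup>2 * f'' u v\<bar>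
       \<le> e * s\<^sup>2 * (norm u + 2 * norm v)" unfolding Gdiff .
  qed
qed

lemma schwarz:
  fixes f :: "'a::real_normed_vector \<Rightarrow> real" and f' f'' :: "'a \<Rightarrow> 'a \<Rightarrow> real"
  assumes d1: "\<And>z. (f has_derivative f' z) (at z)"
    and d2: "\<And>v. ((\<lambda>z. f' z v) has_derivative (\<lambda>w. f'' w v)) (at x)"
  shows "f'' u v = f'' v u"
proof -
  define C where "C = norm u + 2 * norm v + (norm v + 2 * norm u)"
  have C0: "C \<ge> 0" unfolding C_def by simp
  have "\<bar>f'' u v - f'' v u\<bar> \<le> 0 + e" if e: "e > 0" for e
  proof -
    define e' where "e' = e / (C + 1)"
    have e'0: "e' > 0" unfolding e'_def using e C0 by simp
    obtain da where da: "da > 0" "\<And>s. 0 < s \<and> s < da \<Longrightarrow>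
       \<bar>(f (x + s *\<^sub>R u + s *\<^sub>R v) - f (x + s *\<^sub>R u) - f (x + s *\<^sub>R v) + f x) - s\<^sup>2 * f'' u v\<bar>
       \<le> e' * s\<^sup>2 * (norm u + 2 * norm v)"
      using schwarz_approx[OF d1 d2 e'0, where u=u and v=v] by blast
    obtain db where db: "db > 0" "\<And>s. 0 < s \<and> s < db \<Longrightarrow>
       \<bar>(f (x + s *\<^sub>R v + s *\<^sub>R u) - f (x + s *\<^sub>R v) - f (x + s *\<^sub>R u) + f x) - s\<^sup>2 * f'' v u\<bar>
       \<le> e' * s\<^sup>2 * (norm v + 2 * norm u)"
      using schwarz_approx[OF d1 d2 e'0, where u=v and v=u] by blast
    define s where "s = min da db / 2"
    have s: "0 < s" "s < da" "s < db" unfolding s_def using da db by auto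
    have sym: "f (x + s *\<^sub>R v + s *\<^sub>R u) = f (x + s *\<^sub>R u + s *\<^sub>R v)" by (simp add: add_ac)
    define \<Delta> where "\<Delta> = f (x + s *\<^sub>R u + s *\<^sub>R v) - f (x + s *\<^sub>R u) - f (x + s *\<^sub>R v) + f x"
    have A: "\<bar>\<Delta> - s\<^sup>2 * f'' u v\<bar> \<le> e' * s\<^sup>2 * (norm u + 2 * norm v)" using da(2) s unfolding \<Delta>_def by blast
    have B: "\<bar>\<Delta> - s\<^sup>2 * f'' v u\<bar> \<le> e' * s\<^sup>2 * (norm v + 2 * norm u)" using db(2) s sym unfolding \<Delta>_def
      by (smt (verit))
    have "s\<^sup>2 * \<bar>f'' u v - f'' v u\<bar> = \<bar>(\<Delta> - s\<^sup>2 * f'' v u) - (\<Delta> - s\<^sup>2 * f'' u v)\<bar>"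
    proof -
      have "(\<Delta> - s\<^sup>2 * f'' v u) - (\<Delta> - s\<^sup>2 * f'' u v) = s\<^sup>2 * (f'' u v - f'' v u)" by (simp add: algebra_simps)
      then show ?thesis by (simp add: abs_mult)
    qed
    also have "\<dots> \<le> e' * s\<^sup>2 * (norm v + 2 * norm u) + e' * s\<^sup>2 * (norm u + 2 * norm v)"
      using A B by linarith
    also have "\<dots> = s\<^sup>2 * (e' * C)" unfolding C_def by (simp add: algebra_simps)
    finally have "\<bar>f'' u v - f'' v u\<bar> \<le> e' * C" using s(1) by simp
    also have "e' * C \<le> e" unfolding e'_def using e C0 by (simp add: field_simps)
    finally show ?thesis by simp
  qed
  then have "\<bar>f'' u v - f'' v u\<bar> \<le> 0" by (rule field_le_epsilon)
  then show ?thesis by simp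
qed



lemma D_swap:
  assumes hd: "has_derivs g D p"
  shows "length pre + length post + 2 = k \<Longrightarrow> k \<le> p \<Longrightarrow>
    D k y (pre @ u # v # post) = D k y (pre @ v # u # post)"
proof (induction pre arbitrary: k y)
  case Nil
  then obtain m where k: "k = Suc (Suc m)" and lp: "length post = m" by auto
  have mp: "m < p" "Suc m < p" using Nil.prems k by auto
  have d1: "\<And>z. ((\<lambda>z. D m z post) has_derivative (\<lambda>w. D (Suc m) z (w # post))) (at z)"
    by (rule hdD[OF hd mp(1) lp])
  have d2: "\<And>b. ((\<lambda>z. D (Suc m) z (b # post)) has_derivative (\<lambda>w. D (Suc (Suc m)) y (w # b # post))) (at y)"
    by (rule hdD[OF hd mp(2)]) (simp add: lp)
  have "D (Suc (Suc m)) y (u # v # post) = D (Suc (Suc m)) y (v # u # post)"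
    by (rule schwarz[where f="\<lambda>z. D m z post" and f'="\<lambda>z w. D (Suc m) z (w # post)"
          and f''="\<lambda>a b. D (Suc (Suc m)) y (a # b # post)", OF d1 d2])
  then show ?case using k by simp
next
  case (Cons p0 pre')
  then obtain k' where k: "k = Suc k'" and len: "length pre' + length post + 2 = k'" by auto
  have kp: "k' < p" "k' \<le> p" using Cons.prems k by auto
  have IH: "\<And>z. D k' z (pre' @ u # v # post) = D k' z (pre' @ v # u # post)"
    using Cons.IH[OF len kp(2)] .
  have l1: "length (pre' @ u # v # post) = k'" "length (pre' @ v # u # post) = k'" using len by auto
  have a: "((\<lambda>z. D k' z (pre' @ u # v # post)) has_derivative (\<lambda>w. D (Suc k') y (w # pre' @ u # v # post))) (at y)"
    by (rule hdD[OF hd kp(1) l1(1)])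
  have b: "((\<lambda>z. D k' z (pre' @ u # v # post)) has_derivative (\<lambda>w. D (Suc k') y (w # pre' @ v # u # post))) (at y)"
    unfolding IH by (rule hdD[OF hd kp(1) l1(2)])
  have "(\<lambda>w. D (Suc k') y (w # pre' @ u # v # post)) = (\<lambda>w. D (Suc k') y (w # pre' @ v # u # post))"
    by (rule has_derivative_unique[OF a b])
  then have "D (Suc k') y (p0 # pre' @ u # v # post) = D (Suc k') y (p0 # pre' @ v # u # post)" by metis
  then show ?case using k by simp
qed

lemma D_move:
  assumes hd: "has_derivs g D p"
  shows "Suc (j + m) \<le> p \<Longrightarrow>
    D (Suc (j + m)) y (replicate j r @ d # replicate m r) = D (Suc (j + m)) y (replicate (j + m) r @ [d])"
proof (induction m arbitrary: j)
  case 0 then show ?case by simp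
next
  case (Suc m)
  have "D (Suc (j + Suc m)) y (replicate j r @ d # r # replicate m r)
      = D (Suc (j + Suc m)) y (replicate j r @ r # d # replicate m r)"
    by (rule D_swap[OF hd]) (use Suc.prems in auto)
  also have "replicate j r @ r # d # replicate m r = replicate (Suc j) r @ d # replicate m r"
    by (simp add: replicate_app_Cons_same)
  also have "Suc (j + Suc m) = Suc (Suc j + m)" by simp
  also have "D (Suc (Suc j + m)) y (replicate (Suc j) r @ d # replicate m r) = D (Suc (Suc j + m)) y (replicate (Suc j + m) r @ [d])"
    by (rule Suc.IH) (use Suc.prems in simp)
  finally show ?case by simp
qed



lemma mlin_deriv_rep:
  fixes T :: "'a::real_vector list \<Rightarrow> real"
  shows "mlin k T \<Longrightarrow> ((\<lambda>t. T (replicate k (r + t *\<^sub>R d))) has_real_derivative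
     (\<Sum>j<k. T (replicate j r @ d # replicate (k - 1 - j) r))) (at 0)"
proof (induction k arbitrary: T)
  case 0 then show ?case by simp
next
  case (Suc k)
  have lin: "linear (\<lambda>v. T (v # replicate k (r + t *\<^sub>R d)))" for t
    by (rule mlin_first[OF Suc.prems]) simp
  have eq: "(\<lambda>t. T (replicate (Suc k) (r + t *\<^sub>R d))) =
      (\<lambda>t. T (r # replicate k (r + t *\<^sub>R d)) + t * T (d # replicate k (r + t *\<^sub>R d)))"
  proof
    fix t
    show "T (replicate (Suc k) (r + t *\<^sub>R d)) = T (r # replicate k (r + t *\<^sub>R d)) + t * T (d # replicate k (r + t *\<^sub>R d))"
      using lin_add[OF lin[of t], of r "t *\<^sub>R d"] lin_scale[OF lin[of t], of t d] by simp
  qed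
  have d1: "((\<lambda>t. T (r # replicate k (r + t *\<^sub>R d))) has_real_derivative
     (\<Sum>j<k. T (r # replicate j r @ d # replicate (k - 1 - j) r))) (at 0)"
    using Suc.IH[OF mlin_Cons[OF Suc.prems, of r]] by simp
  obtain S2 where d2: "((\<lambda>t. T (d # replicate k (r + t *\<^sub>R d))) has_real_derivative S2) (at 0)"
    using Suc.IH[OF mlin_Cons[OF Suc.prems, of d]] by blast
  have d3: "((\<lambda>t. t * T (d # replicate k (r + t *\<^sub>R d))) has_real_derivative
      1 * T (d # replicate k r) + S2 * 0) (at 0)"
    using DERIV_mult[OF DERIV_ident d2] by simp
  have "((\<lambda>t. T (r # replicate k (r + t *\<^sub>R d)) + t * T (d # replicate k (r + t *\<^sub>R d))) has_real_derivative
      (\<Sum>j<k. T (r # replicate j r @ d # replicate (k - 1 - j) r)) + (1 * T (d # replicate k r) + S2 * 0)) (at 0)"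
    by (rule DERIV_add[OF d1 d3])
  moreover have "(\<Sum>j<k. T (r # replicate j r @ d # replicate (k - 1 - j) r)) + (1 * T (d # replicate k r) + S2 * 0)
      = (\<Sum>j<Suc k. T (replicate j r @ d # replicate (Suc k - 1 - j) r))"
  proof -
    have "(\<Sum>j<Suc k. T (replicate j r @ d # replicate (Suc k - 1 - j) r))
       = T (replicate 0 r @ d # replicate (Suc k - 1 - 0) r) + (\<Sum>j<k. T (replicate (Suc j) r @ d # replicate (Suc k - 1 - Suc j) r))"
      by (rule sum.lessThan_Suc_shift)
    also have "(\<Sum>j<k. T (replicate (Suc j) r @ d # replicate (Suc k - 1 - Suc j) r)) = (\<Sum>j<k. T (r # replicate j r @ d # replicate (k - 1 - j) r))"
    proof (rule sum.cong[OF refl])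
      fix j assume "j \<in> {..<k}"
      have "Suc k - 1 - Suc j = k - 1 - j" by simp
      moreover have "replicate (Suc j) r @ d # xs = r # replicate j r @ d # xs" for xs by simp
      ultimately show "T (replicate (Suc j) r @ d # replicate (Suc k - 1 - Suc j) r) = T (r # replicate j r @ d # replicate (k - 1 - j) r)"
        by (simp only:)
    qed
    also have "T (replicate 0 r @ d # replicate (Suc k - 1 - 0) r) = T (d # replicate k r)" by simp
    finally show ?thesis by simp
  qed
  ultimately show ?case unfolding eq by simp
qed

lemma taylor_deriv:
  fixes D :: "nat \<Rightarrow> 'a::euclidean_space \<Rightarrow> 'a list \<Rightarrow> real"
  assumes hd: "has_derivs g D p"
  shows "((\<lambda>t. taylor_model D p y (x + t *\<^sub>R d)) has_real_derivative
     (\<Sum>m<p. D (Suc m) y (replicate m (x - y) @ [d]) / fact m)) (at 0)"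
proof -
  define r where "r = x - y"
  have eqf: "(\<lambda>t. taylor_model D p y (x + t *\<^sub>R d)) = (\<lambda>t. \<Sum>i=0..p. D i y (replicate i (r + t *\<^sub>R d)) / fact i)"
    unfolding taylor_model_def r_def by (simp add: algebra_simps)
  have di: "((\<lambda>t. D i y (replicate i (r + t *\<^sub>R d)) / fact i) has_real_derivative
      (of_nat i * D i y (replicate (i - 1) r @ [d])) / fact i) (at 0)" if i: "i \<in> {0..p}" for i
  proof -
    have ml: "mlin i (D i y)" using D_mlin[OF hd] i by simp
    have "(\<Sum>j<i. D i y (replicate j r @ d # replicate (i - 1 - j) r)) = of_nat i * D i y (replicate (i - 1) r @ [d])"
    proof (cases i)
      case 0 then show ?thesis by simp
    next
      case (Suc i')
      have "(\<Sum>j<i. D i y (replicate j r @ d # replicate (i - 1 - j) r)) = (\<Sum>j<i. D i y (replicate (i - 1) r @ [d]))"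
      proof (rule sum.cong[OF refl])
        fix j assume j: "j \<in> {..<i}"
        have "D (Suc (j + (i' - j))) y (replicate j r @ d # replicate (i' - j) r) = D (Suc (j + (i' - j))) y (replicate (j + (i' - j)) r @ [d])"
          by (rule D_move[OF hd]) (use j i Suc in auto)
        moreover have "Suc (j + (i' - j)) = i" "j + (i' - j) = i - 1" "i - 1 - j = i' - j" using j Suc by auto
        ultimately show "D i y (replicate j r @ d # replicate (i - 1 - j) r) = D i y (replicate (i - 1) r @ [d])" by simp
      qed
      then show ?thesis by simp
    qed
    then show ?thesis using DERIV_cdivide[OF mlin_deriv_rep[OF ml, of r d], of "fact i"] by simp
  qed
  have "((\<lambda>t. \<Sum>i=0..p. D i y (replicate i (r + t *\<^sub>R d)) / fact i) has_real_derivative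
      (\<Sum>i=0..p. (of_nat i * D i y (replicate (i - 1) r @ [d])) / fact i)) (at 0)"
    by (rule DERIV_sum) (use di in blast)
  moreover have "(\<Sum>i=0..p. (of_nat i * D i y (replicate (i - 1) r @ [d])) / fact i)
      = (\<Sum>m<p. D (Suc m) y (replicate m r @ [d]) / fact m)"
  proof (cases p)
    case 0 then show ?thesis by simp
  next
    case (Suc p')
    have "(\<Sum>i=0..p. (of_nat i * D i y (replicate (i - 1) r @ [d])) / fact i)
        = (\<Sum>m=0..p'. (of_nat (Suc m) * D (Suc m) y (replicate m r @ [d])) / fact (Suc m))"
      unfolding Suc sum.atLeast0_atMost_Suc_shift by simp
    also have "\<dots> = (\<Sum>m=0..p'. D (Suc m) y (replicate m r @ [d]) / fact m)"
      by (rule sum.cong[OF refl]) (simp add: field_simps del: of_nat_Suc)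
    also have "\<dots> = (\<Sum>m<p. D (Suc m) y (replicate m r @ [d]) / fact m)"
      unfolding Suc by (simp add: atLeast0AtMost lessThan_Suc_atMost)
    finally show ?thesis .
  qed
  ultimately show ?thesis unfolding eqf r_def by simp
qed



lemma mlin_diff:
  assumes "mlin k A" "mlin k B" shows "mlin k (\<lambda>ys. A ys - B ys)"
  unfolding mlin_def
proof (intro allI impI)
  fix pre post :: "'a list" assume l: "length pre + length post + 1 = k"
  have a: "linear (\<lambda>v. A (pre @ v # post))" and b: "linear (\<lambda>v. B (pre @ v # post))"
    using assms l unfolding mlin_def by blast+
  show "linear (\<lambda>v. A (pre @ v # post) - B (pre @ v # post))"
    by (rule linearI) (simp_all add: lin_add[OF a] lin_add[OF b] lin_scale[OF a] lin_scale[OF b] algebra_simps)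
qed

lemma holder_bound:
  fixes N :: "'a::euclidean_space \<Rightarrow> real"
  assumes N: "is_norm N" and hold: "holder_derivs g N D p \<nu> L" and p: "p \<ge> 1"
    and len: "length ys = p"
  shows "\<bar>D p x ys - D p y ys\<bar> \<le> fact (p - 1) * (L * N (x - y) powr \<nu>) * prod_list (map N ys)"
proof -
  have hd: "has_derivs g D p" using hold unfolding holder_derivs_def by blast
  have ml: "mlin p (\<lambda>ys. D p x ys - D p y ys)" by (rule mlin_diff; rule D_mlin[OF hd]; simp)
  obtain p' where p': "p = Suc p'" using p by (cases p) auto
  have "\<bar>D p x ys - D p y ys\<bar> \<le> form_dual_norm N p (\<lambda>ys. D p x ys - D p y ys) * prod_list (map N ys)"
    using fdn_abs[OF N, of p' "\<lambda>ys. D p x ys - D p y ys" ys] ml len p' by simp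
  also have "\<dots> \<le> fact (p - 1) * (L * N (x - y) powr \<nu>) * prod_list (map N ys)"
  proof (rule mult_right_mono)
    have "form_dual_norm N p (\<lambda>ys. D p x ys - D p y ys) / fact (p - 1) \<le> L * N (x - y) powr \<nu>"
      using hold unfolding holder_derivs_def by blast
    then show "form_dual_norm N p (\<lambda>ys. D p x ys - D p y ys) \<le> fact (p - 1) * (L * N (x - y) powr \<nu>)"
      by (simp add: divide_le_eq mult.commute)
    show "0 \<le> prod_list (map N ys)" using is_normD(1)[OF N] by (induction ys) auto
  qed
  finally show ?thesis .
qed

lemma grad_remainder:
  fixes N :: "'a::euclidean_space \<Rightarrow> real"
  assumes N: "is_norm N" and hold: "holder_derivs g N D p \<nu> L" and p: "p \<ge> 1"
    and nu: "0 \<le> \<nu>" "real p + \<nu> \<ge> 2" and L: "L > 0"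
  shows "\<bar>D 1 x [d] - (\<Sum>m<p. D (Suc m) y (replicate m (x - y) @ [d]) / fact m)\<bar>
     \<le> L * N (x - y) powr (real p + \<nu> - 1) * N d"
proof -
  have hd: "has_derivs g D p" using hold unfolding holder_derivs_def by blast
  define r where "r = x - y"
  define dif where "dif = (\<lambda>m s. D (Suc m) (y + s *\<^sub>R r) (replicate m r @ [d]))"
  have Nr: "N r \<ge> 0" "N d \<ge> 0" using is_normD(1)[OF N] by auto
  obtain c where c: "0 \<le> c" "c \<le> 1"
    and eq: "D 1 x [d] - (\<Sum>m<p. dif m 0 / fact m) = (dif (p - 1) c - dif (p - 1) 0) / fact (p - 1)"
  proof (cases "p = 1")
    case True
    show ?thesis by (rule that[of 1]) (use True in \<open>simp_all add: dif_def r_def\<close>)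
  next
    case False
    then have p2: "p - 1 > 0" using p by simp
    have der: "\<forall>m t. m < p - 1 \<and> 0 \<le> t \<and> t \<le> 1 \<longrightarrow> DERIV (dif m) t :> dif (Suc m) t"
    proof (intro allI impI)
      fix m :: nat and t :: real assume "m < p - 1 \<and> 0 \<le> t \<and> t \<le> 1"
      then have m: "Suc m < p" by linarith
      have l: "length (replicate m r @ [d]) = Suc m" by simp
      have h1: "((\<lambda>z. D (Suc m) z (replicate m r @ [d])) has_derivative
          (\<lambda>v. D (Suc (Suc m)) (y + t *\<^sub>R r) (v # replicate m r @ [d]))) (at (y + t *\<^sub>R r))"
        by (rule hdD[OF hd m l])
      have h0: "((\<lambda>s. y + s *\<^sub>R r) has_derivative (\<lambda>h. h *\<^sub>R r)) (at t)"
        by (auto intro!: derivative_eq_intros)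
      have lin: "linear (\<lambda>v. D (Suc (Suc m)) (y + t *\<^sub>R r) (v # replicate m r @ [d]))"
        by (rule mlin_first[OF D_mlin[OF hd]]) (use m in simp_all)
      have "(dif m has_derivative (\<lambda>h. D (Suc (Suc m)) (y + t *\<^sub>R r) ((h *\<^sub>R r) # replicate m r @ [d]))) (at t)"
        unfolding dif_def using has_derivative_compose[OF h0 h1] .
      moreover have "(\<lambda>h. D (Suc (Suc m)) (y + t *\<^sub>R r) ((h *\<^sub>R r) # replicate m r @ [d])) = (*) (dif (Suc m) t)"
        unfolding dif_def using lin_scale[OF lin] by (auto simp: mult.commute)
      ultimately show "DERIV (dif m) t :> dif (Suc m) t" unfolding has_field_derivative_def by simp
    qed
    obtain t where t: "0 < t" "t < 1"
      and mac: "dif 0 1 = (\<Sum>m<p - 1. dif m 0 / fact m * 1 ^ m) + dif (p - 1) t / fact (p - 1) * 1 ^ (p - 1)"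
      using Maclaurin[of 1 "p - 1" dif "dif 0", OF _ p2 refl der] by auto
    have d01: "dif 0 1 = D 1 x [d]" unfolding dif_def r_def by simp
    have sp: "(\<Sum>m<p. dif m 0 / fact m) = (\<Sum>m<p - 1. dif m 0 / fact m) + dif (p - 1) 0 / fact (p - 1)"
    proof -
      obtain p' where pp: "p = Suc p'" using p by (cases p) auto
      show ?thesis unfolding pp by simp
    qed
    show ?thesis
      by (rule that[of t]) (use t mac d01 sp in \<open>auto simp: diff_divide_distrib\<close>)
  qed
  have sumeq: "(\<Sum>m<p. D (Suc m) y (replicate m (x - y) @ [d]) / fact m) = (\<Sum>m<p. dif m 0 / fact m)"
    unfolding dif_def r_def by simp
  have lenl: "length (replicate (p - 1) r @ [d]) = p" using p by simp
  have dp: "Suc (p - 1) = p" using p by simp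
  have "\<bar>dif (p - 1) c - dif (p - 1) 0\<bar> \<le> fact (p - 1) * (L * N ((y + c *\<^sub>R r) - y) powr \<nu>) * prod_list (map N (replicate (p - 1) r @ [d]))"
    using holder_bound[OF N hold p lenl, of "y + c *\<^sub>R r" y] unfolding dif_def dp by simp
  also have "prod_list (map N (replicate (p - 1) r @ [d])) = N r ^ (p - 1) * N d" by simp
  also have "N ((y + c *\<^sub>R r) - y) = c * N r" using is_normD(3)[OF N, of c r] c by simp
  finally have B: "\<bar>dif (p - 1) c - dif (p - 1) 0\<bar> \<le> fact (p - 1) * (L * (c * N r) powr \<nu> * (N r ^ (p - 1) * N d))"
    by (simp add: algebra_simps)
  have key: "(c * N r) powr \<nu> * N r ^ (p - 1) \<le> N r powr (real p + \<nu> - 1)"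
  proof (cases "N r = 0")
    case True
    then show ?thesis using p nu by (cases "p = 1") auto
  next
    case False
    then have Npos: "N r > 0" using Nr by simp
    have "(c * N r) powr \<nu> \<le> N r powr \<nu>"
      using c nu Npos by (intro powr_mono2) (auto simp: mult_le_cancel_right1)
    then have "(c * N r) powr \<nu> * N r ^ (p - 1) \<le> N r powr \<nu> * N r ^ (p - 1)"
      using Npos by (intro mult_right_mono) auto
    also have "N r powr \<nu> * N r ^ (p - 1) = N r powr (real p + \<nu> - 1)"
    proof -
      have "N r ^ (p - 1) = N r powr (real p - 1)" using Npos p by (simp add: powr_realpow[symmetric] of_nat_diff)
      then show ?thesis using Npos by (simp add: powr_add[symmetric] algebra_simps)
    qed
    finally show ?thesis .
  qed
  have "\<bar>D 1 x [d] - (\<Sum>m<p. D (Suc m) y (replicate m (x - y) @ [d]) / fact m)\<bar>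
      = \<bar>dif (p - 1) c - dif (p - 1) 0\<bar> / fact (p - 1)"
    unfolding sumeq eq by simp
  also have "\<dots> \<le> L * (c * N r) powr \<nu> * (N r ^ (p - 1) * N d)"
    using B by (simp add: divide_le_eq mult.commute)
  also have "\<dots> = L * ((c * N r) powr \<nu> * N r ^ (p - 1)) * N d" by (simp add: algebra_simps)
  also have "\<dots> \<le> L * N r powr (real p + \<nu> - 1) * N d"
    using key L Nr by (intro mult_right_mono mult_left_mono) auto
  finally show ?thesis unfolding r_def .
qed



lemma subgrad_exists:
  fixes \<phi> :: "'a::euclidean_space \<Rightarrow> real"
  assumes cvx: "convex_on UNIV \<phi>"
  shows "\<exists>\<zeta>. \<zeta> \<in> subdiff \<phi> w"
proof -
  define S where "S = {z :: 'a \<times> real. \<phi> (fst z) < snd z}"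
  define T where "T = {(w, \<phi> w)}"
  have cS: "convex S" unfolding convex_alt
  proof (intro ballI allI impI)
    fix z1 z2 :: "'a \<times> real" and u :: real assume z: "z1 \<in> S" "z2 \<in> S" and u: "0 \<le> u \<and> u \<le> 1"
    have A: "\<phi> (fst z1) < snd z1" "\<phi> (fst z2) < snd z2" using z unfolding S_def by auto
    have c: "\<phi> ((1 - u) *\<^sub>R fst z1 + u *\<^sub>R fst z2) \<le> (1 - u) * \<phi> (fst z1) + u * \<phi> (fst z2)"
      using convex_onD[OF cvx, of u "fst z1" "fst z2"] u by simp
    define m where "m = min (snd z1 - \<phi> (fst z1)) (snd z2 - \<phi> (fst z2))"
    have m: "m > 0" using A unfolding m_def by simp
    have "(1 - u) * m + u * m \<le> (1 - u) * (snd z1 - \<phi> (fst z1)) + u * (snd z2 - \<phi> (fst z2))"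
      using u unfolding m_def by (intro add_mono mult_left_mono) auto
    then have "(1 - u) * \<phi> (fst z1) + u * \<phi> (fst z2) < (1 - u) * snd z1 + u * snd z2"
      using m by (simp add: algebra_simps)
    with c show "(1 - u) *\<^sub>R z1 + u *\<^sub>R z2 \<in> S" unfolding S_def by simp
  qed
  have cT: "convex T" unfolding T_def by simp
  have "(w, \<phi> w + 1) \<in> S" unfolding S_def by simp
  then have ne: "S \<noteq> {}" "T \<noteq> {}" unfolding T_def by auto
  have dj: "S \<inter> T = {}" unfolding S_def T_def by auto
  obtain a b where ab: "a \<noteq> 0" "\<And>x. x \<in> S \<Longrightarrow> inner a x \<le> b" "\<And>x. x \<in> T \<Longrightarrow> inner a x \<ge> b"
    using separating_hyperplane_sets[OF cS cT ne dj] by blast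
  obtain a1 c where a: "a = (a1, c)" by (cases a)
  have inS: "\<And>y t. \<phi> y < t \<Longrightarrow> inner a1 y + c * t \<le> b" using ab(2) unfolding S_def a by auto
  have inT: "inner a1 w + c * \<phi> w \<ge> b" using ab(3)[of "(w, \<phi> w)"] unfolding T_def a by auto
  have c0: "c \<le> 0"
  proof -
    have "inner a1 w + c * (\<phi> w + 1) \<le> b" by (rule inS) simp
    then show ?thesis using inT by (simp add: algebra_simps)
  qed
  have cneg: "c < 0"
  proof (rule ccontr)
    assume "\<not> c < 0"
    then have c00: "c = 0" using c0 by simp
    then have "a1 \<noteq> 0" using ab(1) a by (auto simp: zero_prod_def)
    have "inner a1 (w + a1) + c * (\<phi> (w + a1) + 1) \<le> b" by (rule inS) simp
    then have "inner a1 w + inner a1 a1 \<le> inner a1 w" using inT c00 by (simp add: inner_add_right)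
    then have "inner a1 a1 \<le> 0" by simp
    then show False using \<open>a1 \<noteq> 0\<close> inner_gt_zero_iff[of a1] by linarith
  qed
  show ?thesis
  proof (intro exI[of _ "(- 1 / c) *\<^sub>R a1"], unfold subdiff_def, intro CollectI allI)
    fix y :: 'a
    have "\<phi> w + inner a1 (w - y) / c \<le> \<phi> y + e" if e: "e > 0" for e
    proof -
      have "inner a1 y + c * (\<phi> y + e) \<le> b" by (rule inS) (use e in simp)
      then have "c * (\<phi> w - \<phi> y - e) \<ge> inner a1 y - inner a1 w"
        using inT by (simp add: algebra_simps)
      then have "(\<phi> w - \<phi> y - e) \<le> (inner a1 y - inner a1 w) / c"
        using neg_le_divide_eq[OF cneg] by (simp add: mult.commute)
      then show ?thesis by (simp add: inner_diff_right diff_divide_distrib)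
    qed
    then have "\<phi> w + inner a1 (w - y) / c \<le> \<phi> y" by (rule field_le_epsilon)
    moreover have "inner ((- 1 / c) *\<^sub>R a1) (y - w) = inner a1 (w - y) / c"
    proof -
      have "inner a1 (w - y) = - inner a1 (y - w)" by (simp add: inner_diff_right)
      then show ?thesis by simp
    qed
    ultimately show "\<phi> w + inner ((- 1 / c) *\<^sub>R a1) (y - w) \<le> \<phi> y" by simp
  qed
qed



lemma unif_segment:
  fixes \<phi> :: "'a::euclidean_space \<Rightarrow> real"
  assumes N: "is_norm N" and cvx: "convex_on UNIV \<phi>" and uc: "unif_convex N s \<sigma> \<phi>"
    and t: "0 \<le> t" "t \<le> 1"
  shows "\<phi> (z + t *\<^sub>R (y - z)) + \<sigma> / s * (t * (1 - t) powr s + (1 - t) * t powr s) * N (y - z) powr s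
     \<le> t * \<phi> y + (1 - t) * \<phi> z"
proof -
  define w where "w = z + t *\<^sub>R (y - z)"
  obtain \<zeta> where \<zeta>: "\<zeta> \<in> subdiff \<phi> w" using subgrad_exists[OF cvx] by blast
  have u1: "\<phi> y \<ge> \<phi> w + inner \<zeta> (y - w) + \<sigma> / s * N (y - w) powr s"
    using uc \<zeta> unfolding unif_convex_def by blast
  have u2: "\<phi> z \<ge> \<phi> w + inner \<zeta> (z - w) + \<sigma> / s * N (z - w) powr s"
    using uc \<zeta> unfolding unif_convex_def by blast
  have yw: "y - w = (1 - t) *\<^sub>R (y - z)" unfolding w_def by (simp add: algebra_simps)
  have zw: "z - w = (- t) *\<^sub>R (y - z)" unfolding w_def by (simp add: algebra_simps)
  define I where "I = inner \<zeta> (y - z)"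
  define P where "P = N (y - z) powr s"
  define K where "K = \<sigma> / s"
  have i1: "inner \<zeta> (y - w) = (1 - t) * I" unfolding yw I_def by simp
  have i2: "inner \<zeta> (z - w) = - t * I" unfolding zw I_def by simp
  have n1: "N (y - w) powr s = (1 - t) powr s * P"
    unfolding yw P_def using is_normD(3)[OF N, of "1 - t" "y - z"] t by (simp add: powr_mult)
  have n2: "N (z - w) powr s = t powr s * P"
    unfolding zw P_def using is_normD(3)[OF N, of "- t" "y - z"] t by (simp add: powr_mult)
  have a: "t * (\<phi> w + (1 - t) * I + K * ((1 - t) powr s * P)) \<le> t * \<phi> y"
    using u1 i1 n1 t unfolding K_def by (intro mult_left_mono) auto
  have b: "(1 - t) * (\<phi> w + - t * I + K * (t powr s * P)) \<le> (1 - t) * \<phi> z"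
    using u2 i2 n2 t unfolding K_def by (intro mult_left_mono) auto
  have "t * (\<phi> w + (1 - t) * I + K * ((1 - t) powr s * P)) + (1 - t) * (\<phi> w + - t * I + K * (t powr s * P))
      = \<phi> w + K * (t * (1 - t) powr s + (1 - t) * t powr s) * P"
    by (simp add: algebra_simps)
  then show ?thesis using a b unfolding w_def[symmetric] K_def P_def by linarith
qed

lemma strong_min:
  fixes h \<phi> :: "'a::euclidean_space \<Rightarrow> real"
  assumes N: "is_norm N" and cvx: "convex_on UNIV h" and uc: "unif_convex N s \<sigma> h"
    and s: "s > 0" and \<sigma>: "\<sigma> \<ge> 0"
    and minw: "\<And>t. 0 < t \<Longrightarrow> t < 1 \<Longrightarrow> h z + \<phi> z \<le> h (z + t *\<^sub>R (y - z)) + \<phi> (z + t *\<^sub>R (y - z))"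
    and cvxp: "\<And>t. 0 < t \<Longrightarrow> t < 1 \<Longrightarrow> \<phi> (z + t *\<^sub>R (y - z)) \<le> (1 - t) * \<phi> z + t * \<phi> y"
  shows "h z + \<phi> z + \<sigma> / s * N (y - z) powr s \<le> h y + \<phi> y"
proof -
  define P where "P = N (y - z) powr s"
  have P0: "P \<ge> 0" unfolding P_def by simp
  have K0: "\<sigma> / s \<ge> 0" using s \<sigma> by simp
  have ev: "\<sigma> / s * ((1 - t) powr s) * P \<le> (h y + \<phi> y) - (h z + \<phi> z)" if t: "0 < t" "t < 1" for t
  proof -
    have seg: "h (z + t *\<^sub>R (y - z)) + \<sigma> / s * (t * (1 - t) powr s + (1 - t) * t powr s) * P \<le> t * h y + (1 - t) * h z"
      using unif_segment[OF N cvx uc, of t z y] t unfolding P_def by simp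
    have tt: "0 \<le> (1 - t) * t powr s" using t by simp
    have "0 \<le> \<sigma> / s * ((1 - t) * t powr s) * P" by (intro mult_nonneg_nonneg K0 P0 tt)
    then have "t * (\<sigma> / s * ((1 - t) powr s) * P) \<le> \<sigma> / s * (t * (1 - t) powr s + (1 - t) * t powr s) * P"
      by (simp add: algebra_simps)
    moreover have "h z + \<phi> z \<le> h (z + t *\<^sub>R (y - z)) + \<phi> (z + t *\<^sub>R (y - z))" by (rule minw[OF t])
    moreover have "\<phi> (z + t *\<^sub>R (y - z)) \<le> (1 - t) * \<phi> z + t * \<phi> y" by (rule cvxp[OF t])
    ultimately have "t * (\<sigma> / s * ((1 - t) powr s) * P) \<le> t * ((h y + \<phi> y) - (h z + \<phi> z))"
      using seg by (simp add: algebra_simps)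
    then show ?thesis using t(1) by (simp only: mult_le_cancel_left_pos)
  qed
  have lim: "((\<lambda>t. \<sigma> / s * ((1 - t) powr s) * P) \<longlongrightarrow> \<sigma> / s * ((1 - 0) powr s) * P) (at_right 0)"
    by (intro tendsto_intros) auto
  have "eventually (\<lambda>t. \<sigma> / s * ((1 - t) powr s) * P \<le> (h y + \<phi> y) - (h z + \<phi> z)) (at_right (0::real))"
    unfolding eventually_at_right[OF zero_less_one] using ev by (intro exI[of _ 1]) auto
  from tendsto_upperbound[OF lim this] have "\<sigma> / s * ((1 - 0) powr s) * P \<le> (h y + \<phi> y) - (h z + \<phi> z)" by simp
  then show ?thesis unfolding P_def by simp
qed



lemma young_cq:
  fixes a n q \<beta> :: real
  assumes a: "a \<ge> 0" and n: "n \<ge> 0" and q: "q > 1" and \<beta>: "\<beta> > 0"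
  shows "(\<beta> * (q - 1) powr (1 - q)) powr (1 / q) * a powr (q - 1) * n \<le> (a powr q + \<beta> * n powr q) / q"
proof (cases "a = 0 \<or> n = 0")
  case True
  then show ?thesis using q \<beta> a n by auto
next
  case False
  then have a0: "a > 0" and n0: "n > 0" using a n by auto
  define A where "A = a powr q / (q - 1)"
  define B where "B = \<beta> * n powr q"
  have A0: "A > 0" and B0: "B > 0" unfolding A_def B_def using a0 n0 q \<beta> by auto
  have Y: "A powr ((q - 1) / q) * B powr (1 / q) \<le> (q - 1) / q * A + 1 / q * B"
    by (rule Youngs_inequality_0) (use q A0 B0 in \<open>auto simp: field_simps\<close>)
  have rhs: "(q - 1) / q * A + 1 / q * B = (a powr q + \<beta> * n powr q) / q"
    unfolding A_def B_def using q by (simp add: field_simps)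
  have q0: "q > 0" "q - 1 > 0" using q by auto
  have lA: "A powr ((q - 1) / q) = a powr (q - 1) / (q - 1) powr ((q - 1) / q)"
    unfolding A_def using a0 q0 by (simp add: powr_divide powr_powr)
  have lB: "B powr (1 / q) = \<beta> powr (1 / q) * n"
    unfolding B_def using n0 \<beta> q0 by (simp add: powr_mult powr_powr)
  have cq: "(\<beta> * (q - 1) powr (1 - q)) powr (1 / q) = \<beta> powr (1 / q) / (q - 1) powr ((q - 1) / q)"
  proof -
    have "(\<beta> * (q - 1) powr (1 - q)) powr (1 / q) = \<beta> powr (1 / q) * (q - 1) powr ((1 - q) / q)"
      using \<beta> q0 by (simp add: powr_mult powr_powr)
    also have "(q - 1) powr ((1 - q) / q) = 1 / (q - 1) powr ((q - 1) / q)"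
    proof -
      have "(1 - q) / q = - ((q - 1) / q)" by (simp add: minus_divide_left)
      then show ?thesis using q0 by (simp add: powr_minus divide_inverse)
    qed
    finally show ?thesis by simp
  qed
  have "(\<beta> * (q - 1) powr (1 - q)) powr (1 / q) * a powr (q - 1) * n = A powr ((q - 1) / q) * B powr (1 / q)"
    unfolding cq lA lB by simp
  then show ?thesis using Y rhs by simp
qed

lemma norm_powr_convex:
  fixes N :: "'a::real_vector \<Rightarrow> real"
  assumes N: "is_norm N" and q: "q \<ge> 1"
  shows "convex_on UNIV (\<lambda>y. N y powr q / q)"
proof (rule convex_onI)
  fix t :: real and x y :: 'a assume t: "0 < t" "t < 1"
  have tri: "N ((1 - t) *\<^sub>R x + t *\<^sub>R y) \<le> (1 - t) * N x + t * N y"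
    using is_normD(4)[OF N, of "(1 - t) *\<^sub>R x" "t *\<^sub>R y"] is_normD(3)[OF N, of "1 - t" x] is_normD(3)[OF N, of t y] t
    by simp
  have nn: "N x \<ge> 0" "N y \<ge> 0" "N ((1 - t) *\<^sub>R x + t *\<^sub>R y) \<ge> 0" using is_normD(1)[OF N] by auto
  have cv: "((1 - t) * A + t * B) powr q \<le> (1 - t) * A powr q + t * B powr q" if AB: "A \<ge> 0" "B \<ge> 0" for A B :: real
  proof (cases "A > 0 \<and> B > 0")
    case True
    then show ?thesis using convex_onD[OF powr_convex[OF q], of t A B] t by simp
  next
    case False
    then have "A = 0 \<or> B = 0" using AB by auto
    then show ?thesis
    proof
      assume A: "A = 0"
      have "(t * B) powr q = t powr q * B powr q" by (simp add: powr_mult)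
      also have "\<dots> \<le> t * B powr q"
        using powr_le_one_le[of t q] t q by (intro mult_right_mono) auto
      finally show ?thesis using A by simp
    next
      assume B: "B = 0"
      have "((1 - t) * A) powr q = (1 - t) powr q * A powr q" by (simp add: powr_mult)
      also have "\<dots> \<le> (1 - t) * A powr q"
        using powr_le_one_le[of "1 - t" q] t q by (intro mult_right_mono) auto
      finally show ?thesis using B by simp
    qed
  qed
  have "N ((1 - t) *\<^sub>R x + t *\<^sub>R y) powr q \<le> ((1 - t) * N x + t * N y) powr q"
    using tri nn q by (intro powr_mono2) auto
  also have "\<dots> \<le> (1 - t) * N x powr q + t * N y powr q" by (rule cv) (use nn in auto)
  finally have "N ((1 - t) *\<^sub>R x + t *\<^sub>R y) powr q \<le> (1 - t) * N x powr q + t * N y powr q" .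
  then show "N ((1 - t) *\<^sub>R x + t *\<^sub>R y) powr q / q \<le> (1 - t) * (N x powr q / q) + t * (N y powr q / q)"
  proof -
    have "N ((1 - t) *\<^sub>R x + t *\<^sub>R y) powr q / q \<le> ((1 - t) * N x powr q + t * N y powr q) / q"
      using \<open>N ((1 - t) *\<^sub>R x + t *\<^sub>R y) powr q \<le> (1 - t) * N x powr q + t * N y powr q\<close> q
      by (intro divide_right_mono) auto
    then show ?thesis by (simp add: add_divide_distrib)
  qed
qed simp



lemma key_ineq:
  fixes N :: "'a::euclidean_space \<Rightarrow> real" and g :: "'a \<Rightarrow> real" and lr :: "'a \<Rightarrow> real" and C :: "'a set"
  assumes N: "is_norm N" and hold: "holder_derivs g N D p \<nu> L" and p: "p \<ge> 1"
    and nu: "0 \<le> \<nu>" "real p + \<nu> \<ge> 2" and L: "L > 0"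
    and q: "q = real p + \<nu>" and \<beta>: "\<beta> > 0" and nq: "unif_convex N q \<beta> (\<lambda>y. N y powr q / q)"
    and Mc: "Mc > 0" and KM: "Mc \<le> K" and McL: "L \<le> Mc * q * (\<beta> * (q - 1) powr (1 - q)) powr (1 / q)"
    and lconv: "\<And>t. 0 < t \<Longrightarrow> t < 1 \<Longrightarrow> xi + t *\<^sub>R (y - xi) \<in> C \<and> lr (xi + t *\<^sub>R (y - xi)) \<le> (1 - t) * lr xi + t * lr y"
    and opt: "\<And>w. w \<in> C \<Longrightarrow> taylor_model D p xh xi + Mc * N (xi - xh) powr q + lr xi
        \<le> taylor_model D p xh w + Mc * N (w - xh) powr q + lr w"
  shows "lr xi \<le> D 1 xi [y - xi] + lr y + K * N (y - xh) powr q"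
proof -
  have hd: "has_derivs g D p" using hold unfolding holder_derivs_def by blast
  have q1: "q \<ge> 2" "q > 1" "q > 0" using q nu by auto
  define r where "r = xi - xh"
  define d where "d = y - xi"
  define a where "a = N r"
  define n where "n = N d"
  define b where "b = N (y - xh)"
  have rd: "r + d = y - xh" unfolding r_def d_def by simp
  have ann: "a \<ge> 0" "n \<ge> 0" "b \<ge> 0" unfolding a_def n_def b_def using is_normD(1)[OF N] by auto
  define \<Phi> where "\<Phi> = taylor_model D p xh"
  define \<Phi>D where "\<Phi>D = (\<Sum>m<p. D (Suc m) xh (replicate m (xi - xh) @ [d]) / fact m)"
  define E where "E = (\<lambda>t. (\<Phi> (xi + t *\<^sub>R d) - \<Phi> xi) / t)"
  have der: "((\<lambda>t. \<Phi> (xi + t *\<^sub>R d)) has_real_derivative \<Phi>D) (at 0)"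
    unfolding \<Phi>_def \<Phi>D_def by (rule taylor_deriv[OF hd])
  have Elim: "(E \<longlongrightarrow> \<Phi>D) (at_right 0)"
  proof -
    have "((\<lambda>t. (\<Phi> (xi + t *\<^sub>R d) - \<Phi> (xi + 0 *\<^sub>R d)) / (t - 0)) \<longlongrightarrow> \<Phi>D) (at 0)"
      using der unfolding has_field_derivative_iff .
    then have "(E \<longlongrightarrow> \<Phi>D) (at 0)" unfolding E_def by simp
    then show ?thesis by (rule tendsto_mono[OF at_le, rotated]) simp
  qed
  have cvx\<omega>: "convex_on UNIV (\<lambda>y. N y powr q / q)" by (rule norm_powr_convex[OF N]) (use q1 in simp)
  define G where "G = (\<lambda>t. E t + Mc * (b powr q - a powr q) - Mc * \<beta> * (1 - t) powr q * n powr q + lr y - lr xi)"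
  have Gpos: "0 \<le> G t" if t: "0 < t" "t < 1" for t
  proof -
    define w where "w = xi + t *\<^sub>R d"
    have wC: "w \<in> C" and lw: "lr w \<le> (1 - t) * lr xi + t * lr y" using lconv[OF t] unfolding w_def d_def by auto
    have wr: "w - xh = r + t *\<^sub>R d" unfolding w_def r_def by simp
    have o: "\<Phi> xi + Mc * a powr q + lr xi \<le> \<Phi> w + Mc * N (r + t *\<^sub>R d) powr q + lr w"
      using opt[OF wC] unfolding \<Phi>_def a_def r_def[symmetric] wr .
    define X where "X = t * (1 - t) powr q + (1 - t) * t powr q"
    have seg: "N (r + t *\<^sub>R d) powr q / q + \<beta> / q * X * n powr q \<le> t * (b powr q / q) + (1 - t) * (a powr q / q)"
      using unif_segment[OF N cvx\<omega> nq, of t r "r + d"] t unfolding X_def n_def a_def b_def rd[symmetric] by simp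
    have seg2: "N (r + t *\<^sub>R d) powr q + \<beta> * X * n powr q \<le> t * b powr q + (1 - t) * a powr q"
    proof -
      have "q * (N (r + t *\<^sub>R d) powr q / q + \<beta> / q * X * n powr q) \<le> q * (t * (b powr q / q) + (1 - t) * (a powr q / q))"
        using seg q1 by (intro mult_left_mono) auto
      moreover have "q * (N (r + t *\<^sub>R d) powr q / q + \<beta> / q * X * n powr q) = N (r + t *\<^sub>R d) powr q + \<beta> * X * n powr q"
        using q1(3) by (simp add: field_simps)
      moreover have "q * (t * (b powr q / q) + (1 - t) * (a powr q / q)) = t * b powr q + (1 - t) * a powr q"
        using q1(3) by (simp add: field_simps)
      ultimately show ?thesis by simp
    qed
    have Xge: "t * (1 - t) powr q \<le> X" unfolding X_def using t by simp
    have "\<beta> * (t * (1 - t) powr q) * n powr q \<le> \<beta> * X * n powr q"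
      using Xge \<beta> by (intro mult_right_mono mult_left_mono) auto
    then have s3: "N (r + t *\<^sub>R d) powr q - a powr q \<le> t * (b powr q - a powr q - \<beta> * (1 - t) powr q * n powr q)"
      using seg2 by (simp add: algebra_simps)
    have ii: "Mc * N (r + t *\<^sub>R d) powr q - Mc * a powr q \<le> t * (Mc * (b powr q - a powr q) - Mc * \<beta> * (1 - t) powr q * n powr q)"
    proof -
      have "Mc * (N (r + t *\<^sub>R d) powr q - a powr q) \<le> Mc * (t * (b powr q - a powr q - \<beta> * (1 - t) powr q * n powr q))"
        using s3 Mc by (intro mult_left_mono) auto
      then show ?thesis by (simp add: algebra_simps)
    qed
    have iii: "lr w - lr xi \<le> t * (lr y - lr xi)" using lw by (simp add: algebra_simps)
    have iv: "\<Phi> w - \<Phi> xi = t * E t" unfolding E_def w_def using t by simp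
    have "0 \<le> t * E t + t * (Mc * (b powr q - a powr q) - Mc * \<beta> * (1 - t) powr q * n powr q) + t * (lr y - lr xi)"
      using o ii iii iv by linarith
    also have "\<dots> = t * G t" unfolding G_def by (simp add: algebra_simps)
    finally show ?thesis using t by (simp add: zero_le_mult_iff)
  qed
  have Glim: "(G \<longlongrightarrow> \<Phi>D + Mc * (b powr q - a powr q) - Mc * \<beta> * (1 - 0) powr q * n powr q + lr y - lr xi) (at_right 0)"
    unfolding G_def by (intro tendsto_intros Elim) auto
  have "eventually (\<lambda>t. 0 \<le> G t) (at_right (0::real))"
    unfolding eventually_at_right[OF zero_less_one] using Gpos by (intro exI[of _ 1]) auto
  from tendsto_lowerbound[OF Glim this]
  have lim0: "0 \<le> \<Phi>D + Mc * (b powr q - a powr q) - Mc * \<beta> * n powr q + lr y - lr xi" by simp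
  have gr: "\<bar>D 1 xi [d] - \<Phi>D\<bar> \<le> L * a powr (q - 1) * n"
    using grad_remainder[OF N hold p nu L, of xi d xh] unfolding \<Phi>D_def a_def r_def n_def q by simp
  define cq where "cq = (\<beta> * (q - 1) powr (1 - q)) powr (1 / q)"
  have yo: "cq * a powr (q - 1) * n \<le> (a powr q + \<beta> * n powr q) / q"
    unfolding cq_def by (rule young_cq) (use ann q1 \<beta> in auto)
  have "L * (a powr (q - 1) * n) \<le> (Mc * q * cq) * (a powr (q - 1) * n)"
    using McL ann unfolding cq_def by (intro mult_right_mono) auto
  also have "\<dots> = (Mc * q) * (cq * a powr (q - 1) * n)" by (simp add: algebra_simps)
  also have "\<dots> \<le> (Mc * q) * ((a powr q + \<beta> * n powr q) / q)"
    using yo Mc q1 by (intro mult_left_mono) auto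
  also have "\<dots> = Mc * a powr q + Mc * \<beta> * n powr q" using q1 by (simp add: field_simps)
  finally have Lb: "L * (a powr (q - 1) * n) \<le> Mc * a powr q + Mc * \<beta> * n powr q" .
  have Kb: "Mc * b powr q \<le> K * b powr q" using KM by (intro mult_right_mono) auto
  show ?thesis using lim0 gr Lb Kb unfolding d_def[symmetric] b_def[symmetric] by (simp add: abs_le_iff algebra_simps)
qed



lemma tangent_root:
  fixes u v s :: real
  assumes u: "0 \<le> u" "u \<le> v" and v: "0 < v" and s: "0 < s" "s \<le> 1"
  shows "s * (v - u) * v powr (s - 1) \<le> v powr s - u powr s"
proof -
  define x where "x = u / v"
  have x: "0 \<le> x" "x \<le> 1" unfolding x_def using u v by auto
  have tx: "x powr s \<le> s * x + (1 - s)"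
  proof (cases "x = 0")
    case True then show ?thesis using s by simp
  next
    case False
    then have "x powr s * 1 powr (1 - s) \<le> s * x + (1 - s) * 1"
      using x s by (intro Youngs_inequality_0) auto
    then show ?thesis by simp
  qed
  have us: "u powr s = x powr s * v powr s" unfolding x_def using u v by (simp add: powr_divide)
  have vs: "v powr s = v * v powr (s - 1)" using v by (simp add: powr_diff)
  have "u powr s \<le> (s * x + (1 - s)) * v powr s" unfolding us using tx v by (intro mult_right_mono) auto
  also have "\<dots> = v powr s - s * (v - u) * v powr (s - 1)"
    unfolding x_def using v by (simp add: vs field_simps)
  finally show ?thesis by simp
qed

lemma Ak_bound:
  fixes a A :: "nat \<Rightarrow> real" and q C :: real
  assumes q: "q \<ge> 1" and C: "C > 0" and a_pos: "\<And>i. i \<ge> 1 \<Longrightarrow> a i > 0"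
    and A_def: "\<And>i. A i = (\<Sum>j=1..i. a j)"
    and ratio: "\<And>i. i \<ge> 1 \<Longrightarrow> C * A i powr (q - 1) \<le> a i powr q"
  shows "A k \<ge> C * (real k / q) powr q"
proof -
  define s where "s = 1 / q"
  have s: "0 < s" "s \<le> 1" unfolding s_def using q by auto
  have A0: "A 0 = 0" using A_def by simp
  have AS: "A (Suc k) = A k + a (Suc k)" for k using A_def by simp
  have Anonneg: "A k \<ge> 0" for k unfolding A_def using a_pos by (intro sum_nonneg) (auto intro: less_imp_le)
  have claim: "A k powr s \<ge> real k * C powr s / q" for k
  proof (induction k)
    case 0 then show ?case using A0 by simp
  next
    case (Suc k)
    define v where "v = A (Suc k)"
    define u where "u = A k"
    have ap: "a (Suc k) > 0" using a_pos by simp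
    have vu: "v = u + a (Suc k)" unfolding u_def v_def by (rule AS)
    have u0: "u \<ge> 0" unfolding u_def by (rule Anonneg)
    have v0: "v > 0" using vu u0 ap by simp
    have t: "s * (v - u) * v powr (s - 1) \<le> v powr s - u powr s"
      by (rule tangent_root) (use u0 vu ap v0 s in auto)
    have ar: "C * v powr (q - 1) \<le> a (Suc k) powr q" unfolding v_def by (rule ratio) simp
    have "(C * v powr (q - 1)) powr s \<le> (a (Suc k) powr q) powr s"
      using ar C v0 s by (intro powr_mono2) auto
    then have ar2: "C powr s * v powr ((q - 1) * s) \<le> a (Suc k)"
      using C v0 ap q unfolding s_def by (simp add: powr_mult powr_powr)
    have e: "(q - 1) * s + (s - 1) = 0" unfolding s_def using q by (simp add: field_simps)
    have "s * C powr s = s * (C powr s * v powr ((q - 1) * s)) * v powr (s - 1)"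
      using v0 e by (simp add: powr_add[symmetric] mult.assoc)
    also have "\<dots> \<le> s * a (Suc k) * v powr (s - 1)"
      using ar2 s v0 by (intro mult_right_mono mult_left_mono) auto
    also have "\<dots> = s * (v - u) * v powr (s - 1)" using vu by simp
    also have "\<dots> \<le> v powr s - u powr s" by (rule t)
    finally have step: "C powr s / q \<le> v powr s - u powr s" unfolding s_def by simp
    have "real (Suc k) * C powr s / q = real k * C powr s / q + C powr s / q" by (simp add: add_divide_distrib distrib_right)
    also have "\<dots> \<le> u powr s + (v powr s - u powr s)" using Suc.IH step unfolding u_def by simp
    finally show ?case unfolding v_def by simp
  qed
  have "(real k * C powr s / q) powr q \<le> (A k powr s) powr q"
    using claim[of k] C q by (intro powr_mono2) auto
  also have "(A k powr s) powr q = A k" using Anonneg[of k] q unfolding s_def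
    by (cases "A k = 0") (simp_all add: powr_powr)
  also have "(real k * C powr s / q) powr q = C * (real k / q) powr q"
  proof -
    have "(real k * C powr s / q) powr q = (C powr s * (real k / q)) powr q" by (simp add: field_simps)
    also have "\<dots> = (C powr s) powr q * (real k / q) powr q" by (rule powr_mult)
    also have "(C powr s) powr q = C" using C q unfolding s_def by (simp add: powr_powr)
    finally show ?thesis .
  qed
  finally show ?thesis .
qed



lemma l_conv:
  fixes l :: "'a::real_normed_vector \<Rightarrow> ereal"
  assumes l: "proper_closed_convex l" and x: "l x \<noteq> \<infinity>" and y: "l y \<noteq> \<infinity>" and t: "0 \<le> t" "t \<le> 1"
  shows "l ((1 - t) *\<^sub>R x + t *\<^sub>R y) \<noteq> \<infinity> \<and>
    real_of_ereal (l ((1 - t) *\<^sub>R x + t *\<^sub>R y)) \<le> (1 - t) * real_of_ereal (l x) + t * real_of_ereal (l y)"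
proof -
  define E where "E = {(x, t::real). l x \<le> ereal t}"
  have cE: "convex E" using l unfolding proper_closed_convex_def E_def by blast
  have nm: "\<And>z. l z \<noteq> -\<infinity>" using l unfolding proper_closed_convex_def by blast
  have ex: "l x = ereal (real_of_ereal (l x))" using x nm[of x] by (cases "l x") auto
  have ey: "l y = ereal (real_of_ereal (l y))" using y nm[of y] by (cases "l y") auto
  have "(x, real_of_ereal (l x)) \<in> E" "(y, real_of_ereal (l y)) \<in> E" unfolding E_def using ex ey by auto
  from convexD_alt[OF cE this t]
  have le: "l ((1 - t) *\<^sub>R x + t *\<^sub>R y) \<le> ereal ((1 - t) * real_of_ereal (l x) + t * real_of_ereal (l y))"
    unfolding E_def by simp
  have "l ((1 - t) *\<^sub>R x + t *\<^sub>R y) \<noteq> \<infinity>" using le by auto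
  moreover have "real_of_ereal (l ((1 - t) *\<^sub>R x + t *\<^sub>R y)) \<le> (1 - t) * real_of_ereal (l x) + t * real_of_ereal (l y)"
    using le nm[of "(1 - t) *\<^sub>R x + t *\<^sub>R y"] calculation by (cases "l ((1 - t) *\<^sub>R x + t *\<^sub>R y)") auto
  ultimately show ?thesis by blast
qed

lemma grad_ineq:
  fixes g :: "'a::real_normed_vector \<Rightarrow> real"
  assumes cvx: "convex_on UNIV g" and dg: "(g has_derivative g') (at x)"
  shows "g x + g' (y - x) \<le> g y"
proof -
  have bl: "linear g'" using has_derivative_bounded_linear[OF dg] bounded_linear.linear by blast
  have i: "((\<lambda>t. x + t *\<^sub>R (y - x)) has_derivative (\<lambda>h. h *\<^sub>R (y - x))) (at 0)"
    by (auto intro!: derivative_eq_intros)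
  have "((\<lambda>t. g (x + t *\<^sub>R (y - x))) has_derivative (\<lambda>h. g' (h *\<^sub>R (y - x)))) (at 0)"
    using has_derivative_compose[OF i] dg by simp
  moreover have "(\<lambda>h. g' (h *\<^sub>R (y - x))) = (*) (g' (y - x))"
    using lin_scale[OF bl] by (auto simp: mult.commute)
  ultimately have der: "((\<lambda>t. g (x + t *\<^sub>R (y - x))) has_real_derivative g' (y - x)) (at 0)"
    unfolding has_field_derivative_def by simp
  then have "((\<lambda>t. (g (x + t *\<^sub>R (y - x)) - g (x + 0 *\<^sub>R (y - x))) / (t - 0)) \<longlongrightarrow> g' (y - x)) (at 0)"
    unfolding has_field_derivative_iff .
  then have "((\<lambda>t. (g (x + t *\<^sub>R (y - x)) - g x) / t) \<longlongrightarrow> g' (y - x)) (at 0)" by simp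
  then have lim: "((\<lambda>t. (g (x + t *\<^sub>R (y - x)) - g x) / t) \<longlongrightarrow> g' (y - x)) (at_right 0)"
    by (rule tendsto_mono[OF at_le, rotated]) simp
  have ev: "(g (x + t *\<^sub>R (y - x)) - g x) / t \<le> g y - g x" if t: "0 < t" "t < 1" for t
  proof -
    have "g ((1 - t) *\<^sub>R x + t *\<^sub>R y) \<le> (1 - t) * g x + t * g y"
      using convex_onD[OF cvx, of t x y] t by simp
    moreover have "(1 - t) *\<^sub>R x + t *\<^sub>R y = x + t *\<^sub>R (y - x)" by (simp add: algebra_simps)
    ultimately have "g (x + t *\<^sub>R (y - x)) - g x \<le> t * (g y - g x)" by (simp add: algebra_simps)
    then show ?thesis using t by (simp add: divide_le_eq mult.commute)
  qed
  have "eventually (\<lambda>t. (g (x + t *\<^sub>R (y - x)) - g x) / t \<le> g y - g x) (at_right (0::real))"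
    unfolding eventually_at_right[OF zero_less_one] using ev by (intro exI[of _ 1]) auto
  from tendsto_upperbound[OF lim this] show ?thesis by simp
qed

lemma coef_lemma:
  fixes L lam cq q \<theta>\<^sub>2 \<alpha> :: real
  assumes L: "L > 0" and lam: "lam > 0" and cq: "cq > 0" and q: "q > 0"
    and th: "0 < \<theta>\<^sub>2" "\<theta>\<^sub>2 \<le> 1" and Ll: "L * lam \<le> \<theta>\<^sub>2" and al: "0 \<le> \<alpha>" "\<alpha> \<le> 1"
  defines "Mc \<equiv> L powr \<alpha> / (cq * lam powr (1 - \<alpha>) * \<theta>\<^sub>2 powr \<alpha> * q)"
  shows "Mc > 0" "Mc \<le> 1 / (cq * lam * q)" "L \<le> Mc * q * cq"
proof -
  have e: "Mc = (L * lam) powr \<alpha> / \<theta>\<^sub>2 powr \<alpha> * (1 / (cq * lam * q))"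
  proof -
    have h1: "lam powr (1 - \<alpha>) = lam / lam powr \<alpha>" using lam by (simp add: powr_diff)
    have lp: "lam powr \<alpha> > 0" "\<theta>\<^sub>2 powr \<alpha> > 0" using lam th by auto
    have "Mc = L powr \<alpha> / (cq * (lam / lam powr \<alpha>) * \<theta>\<^sub>2 powr \<alpha> * q)" unfolding Mc_def h1 ..
    also have "\<dots> = (L powr \<alpha> * lam powr \<alpha>) / \<theta>\<^sub>2 powr \<alpha> * (1 / (cq * lam * q))"
      using lp lam cq q by (simp add: field_simps)
    also have "L powr \<alpha> * lam powr \<alpha> = (L * lam) powr \<alpha>" by (simp add: powr_mult)
    finally show ?thesis .
  qed
  show "Mc > 0" unfolding Mc_def using L lam cq q th by simp
  have r1: "(L * lam) powr \<alpha> / \<theta>\<^sub>2 powr \<alpha> \<le> 1"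
    using powr_mono2[OF al(1), of "L * lam" \<theta>\<^sub>2] Ll L lam th by simp
  show "Mc \<le> 1 / (cq * lam * q)" unfolding e using r1 cq lam q
    by (intro mult_left_le_one_le) auto
  define x where "x = L * lam"
  have x: "0 < x" "x \<le> 1" unfolding x_def using L lam Ll th by auto
  have xa: "x * \<theta>\<^sub>2 powr \<alpha> \<le> x powr \<alpha>"
  proof -
    have a1: "x powr (1 - \<alpha>) \<le> 1" using x al by (intro powr_le1) auto
    have a2: "\<theta>\<^sub>2 powr \<alpha> \<le> 1" using th al by (intro powr_le1) auto
    have a3: "x = x powr \<alpha> * x powr (1 - \<alpha>)" using x by (simp add: powr_add[symmetric])
    have "x * \<theta>\<^sub>2 powr \<alpha> = x powr \<alpha> * (x powr (1 - \<alpha>) * \<theta>\<^sub>2 powr \<alpha>)"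
      by (subst a3) (simp add: mult.assoc)
    also have "\<dots> \<le> x powr \<alpha> * 1"
      using a1 a2 x th by (intro mult_left_mono mult_le_one) auto
    finally show ?thesis by simp
  qed
  have "Mc * q * cq = x powr \<alpha> / (\<theta>\<^sub>2 powr \<alpha> * lam)"
    unfolding e x_def using cq q lam by (simp add: field_simps)
  moreover have "L \<le> x powr \<alpha> / (\<theta>\<^sub>2 powr \<alpha> * lam)"
    using xa lam th unfolding x_def by (simp add: le_divide_eq algebra_simps)
  ultimately show "L \<le> Mc * q * cq" by simp
qed



theorem mainTheorem10:
  fixes N :: "'a::euclidean_space \<Rightarrow> real"
    and g :: "'a \<Rightarrow> real" and D :: "nat \<Rightarrow> 'a \<Rightarrow> 'a list \<Rightarrow> real"
    and l :: "'a \<Rightarrow> ereal" and f :: "'a \<Rightarrow> ereal"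
    and h :: "'a \<Rightarrow> real"
    and p :: nat and \<nu> L q \<gamma> \<beta> c\<^sub>q \<alpha> \<theta>\<^sub>1 \<theta>\<^sub>2 :: real
    and x0 xstar :: 'a
    and a A lam :: "nat \<Rightarrow> real"
    and x z xhat :: "nat \<Rightarrow> 'a"
  assumes norm: "is_norm N"
    and p: "p \<ge> 1" and nu: "0 \<le> \<nu>" "\<nu> \<le> 1" "real p + \<nu> \<ge> 2" and L: "L > 0"
    and g_convex: "convex_on UNIV g"
    and g_holder: "holder_derivs g N D p \<nu> L"
    and l: "proper_closed_convex l"
    and f_def: "\<And>y. f y = ereal (g y) + l y"
    and xstar: "\<And>y. f xstar \<le> f y"
    and q_def: "q = real p + \<nu>"
    and gamma: "\<gamma> > 0" and beta: "\<beta> > 0"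
    and norm_q_unif: "unif_convex N q \<beta> (\<lambda>y. N y powr q / q)"
    and cq_def: "c\<^sub>q = (\<beta> * (q - 1) powr (1 - q)) powr (1 / q)"
    and x0: "l x0 < \<infinity>"
    and h_convex: "convex_on UNIV h"
    and h_nonneg: "\<And>y. h y \<ge> 0"
    and h_zero: "\<And>y. h y = 0 \<longleftrightarrow> y = x0"
    and h_unif: "unif_convex N q \<gamma> h"
    and alpha: "0 \<le> \<alpha>" "\<alpha> \<le> 1"
    and a_pos: "\<And>i. i \<ge> 1 \<Longrightarrow> a i > 0"
    and A_def: "\<And>i. A i = (\<Sum>j=1..i. a j)"
    and lambda_def: "\<And>i. lam i = a i powr q / (c\<^sub>q * \<gamma> * A i powr (q - 1))"
    and x_0: "x 0 = x0" and z_0: "z 0 = x0"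
    and xhat_def: "\<And>i. i \<ge> 1 \<Longrightarrow>
        xhat (i - 1) = (a i / A i) *\<^sub>R z (i - 1) + (A (i - 1) / A i) *\<^sub>R x (i - 1)"
    and x_min: "\<And>i y. i \<ge> 1 \<Longrightarrow>
        ereal (taylor_model D p (xhat (i - 1)) (x i)
          + L powr \<alpha> / (c\<^sub>q * lam i powr (1 - \<alpha>) * \<theta>\<^sub>2 powr \<alpha> * q) * N (x i - xhat (i - 1)) powr q)
          + l (x i)
        \<le> ereal (taylor_model D p (xhat (i - 1)) y
          + L powr \<alpha> / (c\<^sub>q * lam i powr (1 - \<alpha>) * \<theta>\<^sub>2 powr \<alpha> * q) * N (y - xhat (i - 1)) powr q)
          + l y"
    and z_min: "\<And>i y. i \<ge> 1 \<Longrightarrow>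
        (\<Sum>j=1..i. ereal (a j) * (ereal (g (x j) + D 1 (x j) [z i - x j]) + l (z i))) + ereal (h (z i))
        \<le> (\<Sum>j=1..i. ereal (a j) * (ereal (g (x j) + D 1 (x j) [y - x j]) + l y)) + ereal (h y)"
    and theta: "0 < \<theta>\<^sub>1" "\<theta>\<^sub>1 \<le> \<theta>\<^sub>2" "\<theta>\<^sub>2 \<le> 1"
    and theta_lambda: "\<And>i. i \<ge> 1 \<Longrightarrow> \<theta>\<^sub>1 \<le> L * lam i \<and> L * lam i \<le> \<theta>\<^sub>2"
  shows "\<forall>k\<ge>1.
     A k \<ge> \<theta>\<^sub>1 * c\<^sub>q * \<gamma> / L * (real k / (real p + \<nu>)) powr (real p + \<nu>)
     \<and> f (x k) - f xstar \<le> ereal (h xstar / A k)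
     \<and> h xstar / A k \<le> L / (\<theta>\<^sub>1 * c\<^sub>q * \<gamma>) * h xstar * ((real p + \<nu>) / real k) powr (real p + \<nu>)"
proof -
  have hd: "has_derivs g D p" using g_holder unfolding holder_derivs_def by blast
  have q1: "q \<ge> 2" "q > 1" "q > 0" using q_def nu by auto
  have cq_pos: "c\<^sub>q > 0" unfolding cq_def using beta q1 by simp
  define C where "C = {y. l y \<noteq> \<infinity>}"
  define lr where "lr = (\<lambda>y. real_of_ereal (l y))"
  have nm: "\<And>y. l y \<noteq> -\<infinity>" using l unfolding proper_closed_convex_def by blast
  have lC: "l y = ereal (lr y)" if "y \<in> C" for y
    using that nm[of y] unfolding C_def lr_def by (cases "l y") auto
  have x0C: "x0 \<in> C" using x0 unfolding C_def by auto
  have conv: "(1 - t) *\<^sub>R u + t *\<^sub>R v \<in> C \<and> lr ((1 - t) *\<^sub>R u + t *\<^sub>R v) \<le> (1 - t) * lr u + t * lr v"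
    if "u \<in> C" "v \<in> C" "0 \<le> t" "t \<le> 1" for u v t
    using l_conv[OF l, of u v t] that unfolding C_def lr_def by blast
  have A0: "A 0 = 0" using A_def[of 0] by simp
  have AS: "A (Suc i) = A i + a (Suc i)" for i using A_def by simp
  have Apos: "A i > 0" if "i \<ge> 1" for i
    unfolding A_def using that a_pos by (intro sum_pos) auto
  have Anonneg: "A i \<ge> 0" for i
    unfolding A_def using a_pos by (intro sum_nonneg) (auto intro: less_imp_le)
  have lam_pos: "lam i > 0" if "i \<ge> 1" for i
    unfolding lambda_def using a_pos[OF that] Apos[OF that] cq_pos gamma by simp
  define Mc where "Mc = (\<lambda>i. L powr \<alpha> / (c\<^sub>q * lam i powr (1 - \<alpha>) * \<theta>\<^sub>2 powr \<alpha> * q))"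
  have xmin: "ereal (taylor_model D p (xhat i) (x (Suc i)) + Mc (Suc i) * N (x (Suc i) - xhat i) powr q) + l (x (Suc i))
        \<le> ereal (taylor_model D p (xhat i) y + Mc (Suc i) * N (y - xhat i) powr q) + l y" for i y
    using x_min[of "Suc i" y] unfolding Mc_def by simp
  have xC: "x i \<in> C" for i
  proof (cases i)
    case 0 then show ?thesis using x_0 x0C by simp
  next
    case (Suc i')
    show ?thesis
    proof (rule ccontr)
      assume "x i \<notin> C"
      then have "l (x i) = \<infinity>" unfolding C_def by simp
      then show False using xmin[of i' x0] lC[OF x0C] Suc by simp
    qed
  qed
  have xmin_real: "taylor_model D p (xhat i) (x (Suc i)) + Mc (Suc i) * N (x (Suc i) - xhat i) powr q + lr (x (Suc i))
        \<le> taylor_model D p (xhat i) y + Mc (Suc i) * N (y - xhat i) powr q + lr y" if "y \<in> C" for i y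
    using xmin[of i y] lC[OF that] lC[OF xC[of "Suc i"]] by simp
  define \<Psi> where "\<Psi> = (\<lambda>i y. (\<Sum>j=1..i. a j * (g (x j) + D 1 (x j) [y - x j] + lr y)) + h y)"
  have zsum: "(\<Sum>j=1..i. ereal (a j) * (ereal (g (x j) + D 1 (x j) [y - x j]) + l y)) + ereal (h y) = ereal (\<Psi> i y)"
    if "y \<in> C" for i y
  proof -
    have "(\<Sum>j=1..i. ereal (a j) * (ereal (g (x j) + D 1 (x j) [y - x j]) + l y))
        = (\<Sum>j=1..i. ereal (a j * (g (x j) + D 1 (x j) [y - x j] + lr y)))"
      using lC[OF that] by simp
    then show ?thesis unfolding \<Psi>_def by simp
  qed
  have zC: "z i \<in> C" for i
  proof (cases i)
    case 0 then show ?thesis using z_0 x0C by simp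
  next
    case (Suc i')
    show ?thesis
    proof (rule ccontr)
      assume "z i \<notin> C"
      then have li: "l (z i) = \<infinity>" unfolding C_def by simp
      have S: "(\<Sum>j=1..i. ereal (a j) * (ereal (g (x j) + D 1 (x j) [z i - x j]) + l (z i))) = \<infinity>"
        unfolding sum_Pinfty using li a_pos[of i] Suc by (intro conjI bexI[of _ i]) auto
      have S2: "(\<Sum>j=1..i. ereal (a j) * (ereal (g (x j) + D 1 (x j) [z i - x j]) + l (z i))) + ereal (h (z i)) = \<infinity>"
        unfolding S by simp
      have zm: "(\<Sum>j=1..i. ereal (a j) * (ereal (g (x j) + D 1 (x j) [z i - x j]) + l (z i))) + ereal (h (z i))
        \<le> (\<Sum>j=1..i. ereal (a j) * (ereal (g (x j) + D 1 (x j) [x0 - x j]) + l x0)) + ereal (h x0)"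
        by (rule z_min) (simp add: Suc)
      then have "\<infinity> \<le> ereal (\<Psi> i x0)" unfolding S2 zsum[OF x0C] .
      then show False by simp
    qed
  qed
  have zmin_real: "\<Psi> i (z i) \<le> \<Psi> i y" if "y \<in> C" for i y
  proof (cases i)
    case 0 then show ?thesis unfolding \<Psi>_def using z_0 h_zero[of x0] h_nonneg[of y] by simp
  next
    case (Suc i')
    have zm: "(\<Sum>j=1..i. ereal (a j) * (ereal (g (x j) + D 1 (x j) [z i - x j]) + l (z i))) + ereal (h (z i))
        \<le> (\<Sum>j=1..i. ereal (a j) * (ereal (g (x j) + D 1 (x j) [y - x j]) + l y)) + ereal (h y)"
      by (rule z_min) (simp add: Suc)
    then have "ereal (\<Psi> i (z i)) \<le> ereal (\<Psi> i y)" unfolding zsum[OF that] zsum[OF zC] .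
    then show ?thesis by simp
  qed
  have gder: "(g has_derivative (\<lambda>v. D 1 u [v])) (at u)" for u
  proof -
    have "((\<lambda>y. D 0 y []) has_derivative (\<lambda>v. D (Suc 0) u [v])) (at u)"
      using hdD[OF hd, of 0 "[]" u] p by simp
    moreover have "(\<lambda>y. D 0 y []) = g" using hd unfolding has_derivs_def by auto
    ultimately show ?thesis by simp
  qed
  have grad: "g u + D 1 u [v - u] \<le> g v" for u v
    using grad_ineq[OF g_convex gder[of u], of v] .
  have lin1: "linear (\<lambda>v. D 1 u [v])" for u
    using mlin_first[OF D_mlin[OF hd], of 0 "[]" u] p by simp
  have phi_conv: "(\<Sum>j=1..i. a j * (g (x j) + D 1 (x j) [((1 - t) *\<^sub>R u + t *\<^sub>R v) - x j] + lr ((1 - t) *\<^sub>R u + t *\<^sub>R v)))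
      \<le> (1 - t) * (\<Sum>j=1..i. a j * (g (x j) + D 1 (x j) [u - x j] + lr u)) + t * (\<Sum>j=1..i. a j * (g (x j) + D 1 (x j) [v - x j] + lr v))"
    if uv: "u \<in> C" "v \<in> C" and t: "0 \<le> t" "t \<le> 1" for i u v t
  proof -
    have lrw: "lr ((1 - t) *\<^sub>R u + t *\<^sub>R v) \<le> (1 - t) * lr u + t * lr v" using conv[OF uv t] by blast
    have "(\<Sum>j=1..i. a j * (g (x j) + D 1 (x j) [((1 - t) *\<^sub>R u + t *\<^sub>R v) - x j] + lr ((1 - t) *\<^sub>R u + t *\<^sub>R v)))
        \<le> (\<Sum>j=1..i. (1 - t) * (a j * (g (x j) + D 1 (x j) [u - x j] + lr u)) + t * (a j * (g (x j) + D 1 (x j) [v - x j] + lr v)))"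
    proof (rule sum_mono)
      fix j assume j: "j \<in> {1..i}"
      have aj: "a j \<ge> 0" using a_pos[of j] j by auto
      have e: "((1 - t) *\<^sub>R u + t *\<^sub>R v) - x j = (1 - t) *\<^sub>R (u - x j) + t *\<^sub>R (v - x j)" by (simp add: algebra_simps)
      have dl: "D 1 (x j) [((1 - t) *\<^sub>R u + t *\<^sub>R v) - x j] = (1 - t) * D 1 (x j) [u - x j] + t * D 1 (x j) [v - x j]"
        unfolding e using lin_add[OF lin1] lin_scale[OF lin1] by simp
      have "g (x j) + D 1 (x j) [((1 - t) *\<^sub>R u + t *\<^sub>R v) - x j] + lr ((1 - t) *\<^sub>R u + t *\<^sub>R v)
          \<le> (1 - t) * (g (x j) + D 1 (x j) [u - x j] + lr u) + t * (g (x j) + D 1 (x j) [v - x j] + lr v)"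
        using dl lrw by (simp add: algebra_simps)
      then have "a j * (g (x j) + D 1 (x j) [((1 - t) *\<^sub>R u + t *\<^sub>R v) - x j] + lr ((1 - t) *\<^sub>R u + t *\<^sub>R v))
          \<le> a j * ((1 - t) * (g (x j) + D 1 (x j) [u - x j] + lr u) + t * (g (x j) + D 1 (x j) [v - x j] + lr v))"
        using aj by (rule mult_left_mono)
      then show "a j * (g (x j) + D 1 (x j) [((1 - t) *\<^sub>R u + t *\<^sub>R v) - x j] + lr ((1 - t) *\<^sub>R u + t *\<^sub>R v))
          \<le> (1 - t) * (a j * (g (x j) + D 1 (x j) [u - x j] + lr u)) + t * (a j * (g (x j) + D 1 (x j) [v - x j] + lr v))"
        by (simp add: algebra_simps)
    qed
    also have "\<dots> = (1 - t) * (\<Sum>j=1..i. a j * (g (x j) + D 1 (x j) [u - x j] + lr u)) + t * (\<Sum>j=1..i. a j * (g (x j) + D 1 (x j) [v - x j] + lr v))"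
      by (simp add: sum.distrib sum_distrib_left)
    finally show ?thesis .
  qed

  have SM: "\<Psi> i (z i) + \<gamma> / q * N (y - z i) powr q \<le> \<Psi> i y" if yC: "y \<in> C" for i y
  proof -
    define \<phi> where "\<phi> = (\<lambda>y. \<Sum>j=1..i. a j * (g (x j) + D 1 (x j) [y - x j] + lr y))"
    have P: "\<And>y. \<Psi> i y = h y + \<phi> y" unfolding \<Psi>_def \<phi>_def by simp
    have wz: "\<And>t. z i + t *\<^sub>R (y - z i) = (1 - t) *\<^sub>R z i + t *\<^sub>R y" by (simp add: algebra_simps)
    have "h (z i) + \<phi> (z i) + \<gamma> / q * N (y - z i) powr q \<le> h y + \<phi> y"
    proof (rule strong_min[OF norm h_convex h_unif q1(3)])
      show "0 \<le> \<gamma>" using gamma by simp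
      fix t :: real assume t: "0 < t" "t < 1"
      have wC: "z i + t *\<^sub>R (y - z i) \<in> C" unfolding wz using conv[OF zC yC, of t] t by auto
      show "h (z i) + \<phi> (z i) \<le> h (z i + t *\<^sub>R (y - z i)) + \<phi> (z i + t *\<^sub>R (y - z i))"
        using zmin_real[OF wC, of i] unfolding P .
      show "\<phi> (z i + t *\<^sub>R (y - z i)) \<le> (1 - t) * \<phi> (z i) + t * \<phi> y"
        unfolding wz \<phi>_def using phi_conv[OF zC yC, of t i] t by simp
    qed
    then show ?thesis unfolding P by simp
  qed
  have th2: "0 < \<theta>\<^sub>2" using theta by simp
  have claim: "A i * (g (x i) + lr (x i)) \<le> \<Psi> i (z i)" for i
  proof (induction i)
    case 0 show ?case unfolding \<Psi>_def using A0 z_0 h_zero[of x0] by simp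
  next
    case (Suc i)
    define a' where "a' = a (Suc i)"
    define A' where "A' = A (Suc i)"
    define x' where "x' = x (Suc i)"
    define z' where "z' = z (Suc i)"
    define xh where "xh = xhat i"
    define K' where "K' = 1 / (c\<^sub>q * lam (Suc i) * q)"
    define ell where "ell = (\<lambda>y. g x' + D 1 x' [y - x'] + lr y)"
    have a'p: "a' > 0" unfolding a'_def using a_pos by simp
    have A'p: "A' > 0" unfolding A'_def using Apos by simp
    have A'eq: "A' = A i + a'" unfolding A'_def a'_def by (rule AS)
    have Ai: "A i \<ge> 0" by (rule Anonneg)
    have xh_eq: "xh = (a' / A') *\<^sub>R z i + (A i / A') *\<^sub>R x i"
      using xhat_def[of "Suc i"] unfolding xh_def a'_def A'_def by simp
    have x'C: "x' \<in> C" and z'C: "z' \<in> C" unfolding x'_def z'_def using xC zC by auto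
    have tt: "1 - a' / A' = A i / A'" using A'eq A'p by (simp add: field_simps)
    have t01: "0 \<le> a' / A'" "a' / A' \<le> 1" using a'p A'p A'eq Ai by auto
    define u where "u = (A i / A') *\<^sub>R x i + (a' / A') *\<^sub>R z'"
    have uC: "u \<in> C" and lru: "lr u \<le> (A i / A') * lr (x i) + (a' / A') * lr z'"
      using conv[OF xC z'C t01] unfolding tt u_def by auto
    have \<Psi>S: "\<Psi> (Suc i) y = \<Psi> i y + a' * ell y" for y
      unfolding \<Psi>_def ell_def a'_def x'_def by (simp add: algebra_simps)
    have gr: "g x' + D 1 x' [x i - x'] \<le> g (x i)" by (rule grad)
    have Lx: "A i * ell (x i) \<le> A i * (g (x i) + lr (x i))"
      using gr Ai unfolding ell_def by (intro mult_left_mono) auto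
    have Lu: "A' * ell u \<le> A i * ell (x i) + a' * ell z'"
    proof -
      have e1: "u - x' = (A i / A') *\<^sub>R (x i - x') + (a' / A') *\<^sub>R (z' - x')"
      proof -
        have "(A i / A') *\<^sub>R x' + (a' / A') *\<^sub>R x' = x'"
          using A'eq A'p by (simp add: scaleR_left_distrib[symmetric] add_divide_distrib[symmetric])
        then show ?thesis unfolding u_def by (simp add: algebra_simps)
      qed
      have e2: "D 1 x' [u - x'] = (A i / A') * D 1 x' [x i - x'] + (a' / A') * D 1 x' [z' - x']"
        unfolding e1 using lin_add[OF lin1] lin_scale[OF lin1] by simp
      have "A' * D 1 x' [u - x'] = A i * D 1 x' [x i - x'] + a' * D 1 x' [z' - x']"
        unfolding e2 using A'p by (simp add: field_simps)
      moreover have "A' * lr u \<le> A i * lr (x i) + a' * lr z'"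
      proof -
        have "A' * lr u \<le> A' * ((A i / A') * lr (x i) + (a' / A') * lr z')"
          using lru A'p by (intro mult_left_mono) auto
        also have "\<dots> = A i * lr (x i) + a' * lr z'" using A'p by (simp add: field_simps)
        finally show ?thesis .
      qed
      ultimately show ?thesis unfolding ell_def using A'eq by (simp add: algebra_simps)
    qed
    have uxh: "u - xh = (a' / A') *\<^sub>R (z' - z i)" unfolding u_def xh_eq by (simp add: algebra_simps)
    have Nq: "N (u - xh) powr q = (a' / A') powr q * N (z' - z i) powr q"
    proof -
      have "N ((a' / A') *\<^sub>R (z' - z i)) = (a' / A') * N (z' - z i)"
        using is_normD(3)[OF norm, of "a' / A'" "z' - z i"] t01 by (simp only: abs_of_nonneg)
      then show ?thesis unfolding uxh by (simp only: powr_mult)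
    qed
    have Kid: "A' * K' * (a' / A') powr q = \<gamma> / q"
    proof -
      have lamS: "lam (Suc i) = a' powr q / (c\<^sub>q * \<gamma> * A' powr (q - 1))"
        unfolding a'_def A'_def by (rule lambda_def)
      have p1: "a' powr q > 0" "A' powr (q - 1) > 0" "A' powr q > 0" using a'p A'p by auto
      have p2: "A' * A' powr (q - 1) = A' powr q"
      proof -
        have "A' powr q = A' powr (1 + (q - 1))" by simp
        also have "\<dots> = A' powr 1 * A' powr (q - 1)" by (rule powr_add)
        also have "A' powr 1 = A'" using A'p by simp
        finally show ?thesis by simp
      qed
      have "A' * K' * (a' / A') powr q = A' * (c\<^sub>q * \<gamma> * A' powr (q - 1)) / (c\<^sub>q * a' powr q * q) * (a' powr q / A' powr q)"
        unfolding K'_def lamS using a'p A'p by (simp add: powr_divide)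
      also have "\<dots> = \<gamma> / q * ((A' * A' powr (q - 1)) / A' powr q)"
        using p1 cq_pos q1 by (simp add: field_simps)
      also have "\<dots> = \<gamma> / q" unfolding p2 using p1 by simp
      finally show ?thesis .
    qed
    obtain Mcp KM McL0 where coef: "Mc (Suc i) > 0" "Mc (Suc i) \<le> K'" "L \<le> Mc (Suc i) * q * c\<^sub>q"
      using coef_lemma[OF L lam_pos[of "Suc i"] cq_pos q1(3) th2 theta(3) _ alpha] theta_lambda[of "Suc i"]
      unfolding Mc_def K'_def by auto
    have key: "lr x' \<le> D 1 x' [u - x'] + lr u + K' * N (u - xh) powr q"
    proof (rule key_ineq[OF norm g_holder p nu(1) nu(3) L q_def beta norm_q_unif coef(1) coef(2)])
      show "L \<le> Mc (Suc i) * q * (\<beta> * (q - 1) powr (1 - q)) powr (1 / q)" using coef(3) cq_def by simp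
      fix t :: real assume t: "0 < t" "t < 1"
      have "x' + t *\<^sub>R (u - x') = (1 - t) *\<^sub>R x' + t *\<^sub>R u" by (simp add: algebra_simps)
      then show "x' + t *\<^sub>R (u - x') \<in> C \<and> lr (x' + t *\<^sub>R (u - x')) \<le> (1 - t) * lr x' + t * lr u"
        using conv[OF x'C uC, of t] t by simp
    next
      fix w assume "w \<in> C"
      then show "taylor_model D p xh x' + Mc (Suc i) * N (x' - xh) powr q + lr x'
          \<le> taylor_model D p xh w + Mc (Suc i) * N (w - xh) powr q + lr w"
        using xmin_real[of w i] unfolding xh_def x'_def by simp
    qed
    have K0: "K' \<ge> 0" unfolding K'_def using cq_pos lam_pos[of "Suc i"] q1 by simp
    have "A' * (g x' + lr x') \<le> A' * (ell u + K' * N (u - xh) powr q)"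
      using key A'p unfolding ell_def by (intro mult_left_mono) auto
    also have "\<dots> = A' * ell u + \<gamma> / q * N (z' - z i) powr q"
    proof -
      have "A' * (ell u + K' * ((a' / A') powr q * N (z' - z i) powr q)) = A' * ell u + (A' * K' * (a' / A') powr q) * N (z' - z i) powr q"
        by (simp add: algebra_simps)
      then show ?thesis unfolding Nq Kid by simp
    qed
    also have "\<dots> \<le> A i * (g (x i) + lr (x i)) + a' * ell z' + \<gamma> / q * N (z' - z i) powr q"
      using Lu Lx by simp
    also have "\<dots> \<le> \<Psi> i (z i) + \<gamma> / q * N (z' - z i) powr q + a' * ell z'"
      using Suc.IH by simp
    also have "\<dots> \<le> \<Psi> i z' + a' * ell z'" using SM[OF z'C, of i] by simp
    also have "\<dots> = \<Psi> (Suc i) (z (Suc i))" unfolding \<Psi>S z'_def ..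
    finally show ?case unfolding A'_def x'_def .
  qed
  have fC: "f y = ereal (g y + lr y)" if "y \<in> C" for y using f_def[of y] lC[OF that] by simp
  have xsC: "xstar \<in> C"
  proof (rule ccontr)
    assume "xstar \<notin> C"
    then have "l xstar = \<infinity>" unfolding C_def by simp
    then have "f xstar = \<infinity>" using f_def[of xstar] by simp
    then show False using xstar[of x0] fC[OF x0C] by simp
  qed
  define C0 where "C0 = \<theta>\<^sub>1 * c\<^sub>q * \<gamma> / L"
  have C0p: "C0 > 0" unfolding C0_def using theta cq_pos gamma L by simp
  have ratio: "C0 * A i powr (q - 1) \<le> a i powr q" if i: "i \<ge> 1" for i
  proof -
    have Ap: "A i powr (q - 1) > 0" using Apos[OF i] by simp
    have "\<theta>\<^sub>1 \<le> L * (a i powr q / (c\<^sub>q * \<gamma> * A i powr (q - 1)))"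
      using theta_lambda[OF i] lambda_def[of i] by simp
    then have "\<theta>\<^sub>1 * (c\<^sub>q * \<gamma> * A i powr (q - 1)) \<le> L * a i powr q"
      using Ap cq_pos gamma by (simp add: le_divide_eq mult.assoc)
    then show ?thesis unfolding C0_def using L by (simp add: divide_le_eq algebra_simps)
  qed
  have Abnd: "A k \<ge> C0 * (real k / q) powr q" for k
    by (rule Ak_bound[of q C0 a A]) (use q1 C0p a_pos A_def ratio in auto)
  show ?thesis
  proof (intro allI impI conjI)
    fix k :: nat assume k: "k \<ge> 1"
    have Akp: "A k > 0" using Apos[OF k] .
    show "A k \<ge> \<theta>\<^sub>1 * c\<^sub>q * \<gamma> / L * (real k / (real p + \<nu>)) powr (real p + \<nu>)"
      using Abnd[of k] unfolding C0_def q_def .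
    have up: "\<Psi> k xstar \<le> A k * (g xstar + lr xstar) + h xstar"
    proof -
      have "(\<Sum>j=1..k. a j * (g (x j) + D 1 (x j) [xstar - x j] + lr xstar)) \<le> (\<Sum>j=1..k. a j * (g xstar + lr xstar))"
      proof (rule sum_mono)
        fix j assume "j \<in> {1..k}"
        then have "a j \<ge> 0" using a_pos[of j] by auto
        then show "a j * (g (x j) + D 1 (x j) [xstar - x j] + lr xstar) \<le> a j * (g xstar + lr xstar)"
          using grad[of "x j" xstar] by (intro mult_left_mono) auto
      qed
      also have "\<dots> = A k * (g xstar + lr xstar)" unfolding A_def by (simp add: sum_distrib_right)
      finally show ?thesis unfolding \<Psi>_def by simp
    qed
    have "A k * (g (x k) + lr (x k)) \<le> A k * (g xstar + lr xstar) + h xstar"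
      using claim[of k] zmin_real[OF xsC, of k] up by linarith
    then have "A k * ((g (x k) + lr (x k)) - (g xstar + lr xstar)) \<le> h xstar" by (simp add: algebra_simps)
    then have dif: "(g (x k) + lr (x k)) - (g xstar + lr xstar) \<le> h xstar / A k"
      using Akp by (simp add: le_divide_eq mult.commute)
    show "f (x k) - f xstar \<le> ereal (h xstar / A k)"
      unfolding fC[OF xC] fC[OF xsC] using dif by simp
    define B where "B = (real k / q) powr q"
    have Bp: "B > 0" unfolding B_def using k q1 by simp
    have hn: "h xstar \<ge> 0" by (rule h_nonneg)
    have AB: "C0 * B \<le> A k" using Abnd[of k] unfolding B_def .
    have "h xstar / A k \<le> h xstar / (C0 * B)"
      using hn AB C0p Bp Akp by (intro divide_left_mono) auto
    also have "\<dots> = L / (\<theta>\<^sub>1 * c\<^sub>q * \<gamma>) * h xstar * ((real p + \<nu>) / real k) powr (real p + \<nu>)"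
    proof -
      have "((real p + \<nu>) / real k) powr (real p + \<nu>) = 1 / B"
        unfolding B_def q_def[symmetric] using k q1 by (simp add: powr_divide)
      then show ?thesis unfolding C0_def by (simp add: field_simps)
    qed
    finally show "h xstar / A k \<le> L / (\<theta>\<^sub>1 * c\<^sub>q * \<gamma>) * h xstar * ((real p + \<nu>) / real k) powr (real p + \<nu>)" .
  qed
qed


end
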